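(* Let $(G,u,v,\alpha,\beta)$ be a Guvab with $\lim_{k\to\infty}W_k=\frac12$ and $\beta<1$. Then there exists $N$ such that for all $k\ge N$, $$\left|W_k-\tfrac12\right|=0.5\,|1-2\beta|^k.$$
   Context: A Guvab is a tuple $(G,u,v,\alpha,\beta)$ where $G$ is a finite, connected, simple graph, $u,v\in V(G)$, and $\alpha,\beta\in[0,1]$ with $\alpha\le\beta$. A random walk on $G$ with starting vertex $w$ and laziness $\gamma$ is the Markov chain $R_0=w$ and, for $i\ge1$, $R_i=R_{i-1}$ with probability $\gamma$ and $R_i=t$ with probability $\frac{1-\gamma}{\deg(R_{i-1})}$ for each neighbor $t$ of $R_{i-1}$. $\mu_k$ is the distribution after $k$ steps of the walk from $u$ with laziness $\alpha$, $\nu_k$ that of the walk from $v$ with laziness $\beta$, and $W_k=W(\mu_k,\nu_k)$ is the Wasserstein ($L^1$ optimal transport) distance with respect to the graph distance: the minimum over transportation plans (nonnegative $T$ on $V(G)\times V(G)$ with marginals $\mu_k,\nu_k$) of $\sum d(w_1,w_2)T(w_1,w_2)$. *)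

theory Defs
  imports "HOL-Analysis.Analysis"
begin

definition edge_rel :: "'a set \<Rightarrow> ('a \<Rightarrow> 'a \<Rightarrow> bool) \<Rightarrow> ('a \<times> 'a) set" where
  "edge_rel V E = {(x, y). x \<in> V \<and> y \<in> V \<and> E x y}"

definition simple_graph :: "'a set \<Rightarrow> ('a \<Rightarrow> 'a \<Rightarrow> bool) \<Rightarrow> bool" where
  "simple_graph V E \<longleftrightarrow> finite V \<and> V \<noteq> {} \<and>
     (\<forall>x y. E x y \<longrightarrow> x \<in> V \<and> y \<in> V) \<and>
     (\<forall>x y. E x y \<longrightarrow> E y x) \<and> (\<forall>x. \<not> E x x)"

definition connected_graph :: "'a set \<Rightarrow> ('a \<Rightarrow> 'a \<Rightarrow> bool) \<Rightarrow> bool" where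
  "connected_graph V E \<longleftrightarrow> simple_graph V E \<and>
     (\<forall>x\<in>V. \<forall>y\<in>V. (x, y) \<in> (edge_rel V E)\<^sup>*)"

definition deg :: "'a set \<Rightarrow> ('a \<Rightarrow> 'a \<Rightarrow> bool) \<Rightarrow> 'a \<Rightarrow> nat" where
  "deg V E x = card {y \<in> V. E x y}"

definition gdist :: "'a set \<Rightarrow> ('a \<Rightarrow> 'a \<Rightarrow> bool) \<Rightarrow> 'a \<Rightarrow> 'a \<Rightarrow> nat" where
  "gdist V E x y = (LEAST n. (x, y) \<in> (edge_rel V E) ^^ n)"

(* Transition probability of the lazy random walk with laziness g.
   (Convention for an isolated vertex, which only occurs in the one-vertex graph:
    the walk stays put.) *)
definition trans_prob :: "'a set \<Rightarrow> ('a \<Rightarrow> 'a \<Rightarrow> bool) \<Rightarrow> real \<Rightarrow> 'a \<Rightarrow> 'a \<Rightarrow> real" where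
  "trans_prob V E g s t =
     (if deg V E s = 0 then (if s = t then 1 else 0)
      else if s = t then g
      else if E s t then (1 - g) / real (deg V E s) else 0)"

primrec walk_dist :: "'a set \<Rightarrow> ('a \<Rightarrow> 'a \<Rightarrow> bool) \<Rightarrow> real \<Rightarrow> 'a \<Rightarrow> nat \<Rightarrow> 'a \<Rightarrow> real" where
  "walk_dist V E g w 0 = (\<lambda>t. if t = w then 1 else 0)"
| "walk_dist V E g w (Suc k) =
     (\<lambda>t. \<Sum>s\<in>V. walk_dist V E g w k s * trans_prob V E g s t)"

definition transport_plan ::
  "'a set \<Rightarrow> ('a \<Rightarrow> real) \<Rightarrow> ('a \<Rightarrow> real) \<Rightarrow> ('a \<Rightarrow> 'a \<Rightarrow> real) \<Rightarrow> bool" where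
  "transport_plan V \<mu> \<nu> T \<longleftrightarrow>
     (\<forall>x\<in>V. \<forall>y\<in>V. T x y \<ge> 0) \<and>
     (\<forall>x\<in>V. (\<Sum>y\<in>V. T x y) = \<mu> x) \<and>
     (\<forall>y\<in>V. (\<Sum>x\<in>V. T x y) = \<nu> y)"

definition wasserstein ::
  "'a set \<Rightarrow> ('a \<Rightarrow> 'a \<Rightarrow> bool) \<Rightarrow> ('a \<Rightarrow> real) \<Rightarrow> ('a \<Rightarrow> real) \<Rightarrow> real" where
  "wasserstein V E \<mu> \<nu> =
     Inf ((\<lambda>T. \<Sum>x\<in>V. \<Sum>y\<in>V. real (gdist V E x y) * T x y) ` {T. transport_plan V \<mu> \<nu> T})"

definition guvab :: "'a set \<Rightarrow> ('a \<Rightarrow> 'a \<Rightarrow> bool) \<Rightarrow> 'a \<Rightarrow> 'a \<Rightarrow> real \<Rightarrow> real \<Rightarrow> bool" where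
  "guvab V E u v \<alpha> \<beta> \<longleftrightarrow> connected_graph V E \<and> u \<in> V \<and> v \<in> V \<and>
     0 \<le> \<alpha> \<and> \<alpha> \<le> \<beta> \<and> \<beta> \<le> 1"

definition Wk :: "'a set \<Rightarrow> ('a \<Rightarrow> 'a \<Rightarrow> bool) \<Rightarrow> 'a \<Rightarrow> 'a \<Rightarrow> real \<Rightarrow> real \<Rightarrow> nat \<Rightarrow> real" where
  "Wk V E u v \<alpha> \<beta> k = wasserstein V E (walk_dist V E \<alpha> u k) (walk_dist V E \<beta> v k)"

end

theory Submission
  imports Defs
begin

locale gr =
  fixes V :: "'a set" and E :: "'a \<Rightarrow> 'a \<Rightarrow> bool"
  assumes conn: "connected_graph V E"
begin

abbreviation "R \<equiv> edge_rel V E"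

lemma fin: "finite V" using conn unfolding connected_graph_def simple_graph_def by auto
lemma EV: "E x y \<Longrightarrow> x \<in> V \<and> y \<in> V" using conn unfolding connected_graph_def simple_graph_def by auto
lemma Esym: "E x y \<Longrightarrow> E y x" using conn unfolding connected_graph_def simple_graph_def by auto
lemma Eirr: "\<not> E x x" using conn unfolding connected_graph_def simple_graph_def by auto
lemma Vne: "V \<noteq> {}" using conn unfolding connected_graph_def simple_graph_def by auto
lemma reach: "x \<in> V \<Longrightarrow> y \<in> V \<Longrightarrow> \<exists>n. (x,y) \<in> R ^^ n"
  using conn unfolding connected_graph_def by (auto simp: rtrancl_power)

lemma R_iff: "(x,y) \<in> R \<longleftrightarrow> E x y" using EV unfolding edge_rel_def by auto

lemma relpow_V: "(x,y) \<in> R ^^ n \<Longrightarrow> x \<in> V \<Longrightarrow> y \<in> V"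
  by (induction n arbitrary: y) (auto elim: relpow_Suc_E simp: R_iff dest: EV)

lemma relpow_sym: "(x,y) \<in> R ^^ n \<Longrightarrow> (y,x) \<in> R ^^ n"
proof (induction n arbitrary: y)
  case 0 then show ?case by auto
next
  case (Suc n)
  then obtain z where "(x,z) \<in> R ^^ n" "(z,y) \<in> R" by (auto elim: relpow_Suc_E)
  moreover have "(z,x) \<in> R ^^ n" using Suc.IH[OF \<open>(x,z) \<in> R ^^ n\<close>] .
  moreover have "(y,z) \<in> R" using \<open>(z,y) \<in> R\<close> by (auto simp: R_iff Esym)
  ultimately show ?case by (metis relpow_Suc_I2)
qed

lemma gdist_walk: "x \<in> V \<Longrightarrow> y \<in> V \<Longrightarrow> (x,y) \<in> R ^^ gdist V E x y"
  unfolding gdist_def using reach by (metis LeastI_ex)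

lemma gdist_refl: "gdist V E x x = 0"
  unfolding gdist_def by (metis (mono_tags) Least_eq_0 relpow_0_I)

lemma gdist_pos: "x \<in> V \<Longrightarrow> y \<in> V \<Longrightarrow> x \<noteq> y \<Longrightarrow> gdist V E x y \<ge> 1"
  using gdist_walk[of x y] by (cases "gdist V E x y") auto

lemma gdist_edge: "E x y \<Longrightarrow> gdist V E x y = 1"
proof -
  assume e: "E x y"
  have "(x,y) \<in> R ^^ 1" using e by (simp add: R_iff)
  then have "gdist V E x y \<le> 1" unfolding gdist_def by (rule Least_le)
  moreover have "x \<noteq> y" using e Eirr by auto
  ultimately show ?thesis using gdist_pos[of x y] EV[OF e] by auto
qed

definition "Mx = Max ((\<lambda>(x,y). gdist V E x y) ` (V \<times> V))"

lemma gdist_le: "x \<in> V \<Longrightarrow> y \<in> V \<Longrightarrow> gdist V E x y \<le> Mx"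
  unfolding Mx_def by (rule Max_ge) (auto simp: fin)

lemma deg_sum: "real (deg V E x) = (\<Sum>y\<in>V. if E x y then 1 else 0)"
proof -
  have "{y\<in>V. E x y} = V \<inter> Collect (E x)" by auto
  then show ?thesis unfolding deg_def by (simp add: sum.If_cases fin)
qed

lemma deg_le: "deg V E x \<le> card V"
  unfolding deg_def by (rule card_mono[OF fin]) auto

end

locale gr2 = gr +
  assumes two: "card V \<ge> 2"
begin

lemma nbr: "x \<in> V \<Longrightarrow> \<exists>y. E x y"
proof -
  assume x: "x \<in> V"
  obtain y where y: "y \<in> V" "y \<noteq> x"
    using two x by (metis card_2_iff' card_le_Suc0_iff_eq fin not_less_eq_eq numeral_2_eq_2)
  obtain n where "(x,y) \<in> R ^^ n" using reach x y by auto
  then show ?thesis using y(2)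
  proof (induction n arbitrary: y)
    case 0 then show ?case by auto
  next
    case (Suc n)
    then obtain z where z: "(x,z) \<in> R ^^ n" "(z,y) \<in> R" by (auto elim: relpow_Suc_E)
    show ?case
    proof (cases "z = x")
      case True then show ?thesis using z by (auto simp: R_iff)
    next
      case False then show ?thesis using Suc.IH z by auto
    qed
  qed
qed

lemma deg_pos: "x \<in> V \<Longrightarrow> deg V E x > 0"
  using nbr[of x] unfolding deg_def by (auto simp: card_gt_0_iff fin dest: EV)

end

context gr2 begin

abbreviation "P g \<equiv> trans_prob V E g"
abbreviation "wd g \<equiv> walk_dist V E g"

lemma P_split: "s \<in> V \<Longrightarrow> P g s t = (if s = t then g else 0) + (if E s t then (1-g)/real (deg V E s) else 0)"
  using deg_pos[of s] Eirr[of s] unfolding trans_prob_def by auto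

lemma P_nonneg: "0 \<le> g \<Longrightarrow> g \<le> 1 \<Longrightarrow> P g s t \<ge> 0"
  unfolding trans_prob_def by auto

lemma P_row: assumes "s \<in> V" shows "(\<Sum>t\<in>V. P g s t) = 1"
proof -
  have "(\<Sum>t\<in>V. P g s t) = (\<Sum>t\<in>V. (if s = t then g else 0)) + (\<Sum>t\<in>V. (if E s t then (1-g)/real (deg V E s) else 0))"
    using assms by (simp add: P_split sum.distrib)
  also have "(\<Sum>t\<in>V. (if s = t then g else 0)) = g" using assms fin by simp
  also have "(\<Sum>t\<in>V. (if E s t then (1-g)/real (deg V E s) else 0)) = (1-g)/real (deg V E s) * (\<Sum>t\<in>V. if E s t then 1 else 0)"
    by (simp add: sum_distrib_left if_distrib cong: if_cong)
  also have "\<dots> = 1 - g" using deg_pos[OF assms] by (simp add: deg_sum[symmetric])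
  finally show ?thesis by simp
qed

lemma wd_nonneg: "0 \<le> g \<Longrightarrow> g \<le> 1 \<Longrightarrow> wd g w k t \<ge> 0"
  by (induction k arbitrary: t) (auto intro!: sum_nonneg mult_nonneg_nonneg P_nonneg)

lemma wd_row: assumes "w \<in> V" shows "(\<Sum>t\<in>V. wd g w k t) = 1"
proof (induction k)
  case 0 then show ?case using assms fin by simp
next
  case (Suc k)
  have "(\<Sum>t\<in>V. wd g w (Suc k) t) = (\<Sum>s\<in>V. wd g w k s * (\<Sum>t\<in>V. P g s t))"
    by (simp add: sum_distrib_left) (rule sum.swap)
  also have "\<dots> = (\<Sum>s\<in>V. wd g w k s)" by (simp add: P_row)
  finally show ?case using Suc by simp
qed

lemma evolve:
  assumes "\<And>k t. t \<in> V \<Longrightarrow> f (Suc k) t = (\<Sum>s\<in>V. f k s * P g s t)"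
  shows "t \<in> V \<Longrightarrow> f (k+n) t = (\<Sum>s\<in>V. f k s * wd g s n t)"
proof (induction n arbitrary: t)
  case 0 then show ?case using fin by (simp add: if_distrib cong: if_cong)
next
  case (Suc n)
  have "f (k + Suc n) t = (\<Sum>s'\<in>V. f (k+n) s' * P g s' t)" using assms Suc.prems by simp
  also have "\<dots> = (\<Sum>s'\<in>V. (\<Sum>s\<in>V. f k s * wd g s n s') * P g s' t)" using Suc.IH by simp
  also have "\<dots> = (\<Sum>s\<in>V. f k s * (\<Sum>s'\<in>V. wd g s n s' * P g s' t))"
    by (simp add: sum_distrib_left sum_distrib_right mult.assoc) (rule sum.swap)
  finally show ?case by simp
qed

definition "Dt = (\<Sum>y\<in>V. real (deg V E y))"
definition "sd x = real (deg V E x) / Dt"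

lemma Dt_pos: "Dt > 0"
proof -
  obtain x where "x \<in> V" using Vne by auto
  then have "real (deg V E x) > 0" using deg_pos by auto
  then show ?thesis unfolding Dt_def using \<open>x \<in> V\<close> fin
    by (metis of_nat_0_le_iff sum_pos2)
qed

lemma sd_sum: "(\<Sum>x\<in>V. sd x) = 1"
  unfolding sd_def using Dt_pos by (simp add: sum_divide_distrib[symmetric] Dt_def)

lemma sd_nonneg: "sd x \<ge> 0" unfolding sd_def using Dt_pos by simp

lemma deg_sum_in: "real (deg V E t) = (\<Sum>s\<in>V. if E s t then 1 else 0)"
  unfolding deg_sum by (rule sum.cong) (auto dest: Esym)

lemma sd_stat: assumes t: "t \<in> V" and g: "0 \<le> g" "g \<le> 1"
  shows "(\<Sum>s\<in>V. sd s * P g s t) = sd t"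
proof -
  have "\<And>s. s \<in> V \<Longrightarrow> sd s * P g s t = (if s = t then g * sd t else 0) + (if E s t then (1-g)/Dt else 0)"
  proof -
    fix s assume s: "s \<in> V"
    have d: "real (deg V E s) > 0" using deg_pos[OF s] by simp
    show "?thesis s" using d Dt_pos Eirr[of s] by (auto simp: P_split[OF s] sd_def field_simps)
  qed
  then have "(\<Sum>s\<in>V. sd s * P g s t) = (\<Sum>s\<in>V. (if s = t then g * sd t else 0)) + (\<Sum>s\<in>V. (if E s t then (1-g)/Dt else 0))"
    by (simp add: sum.distrib)
  also have "(\<Sum>s\<in>V. (if s = t then g * sd t else 0)) = g * sd t" using t fin by simp
  also have "(\<Sum>s\<in>V. (if E s t then (1-g)/Dt else 0)) = (1-g)/Dt * real (deg V E t)"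
    unfolding deg_sum_in by (simp add: sum_distrib_left if_distrib cong: if_cong)
  also have "g * sd t + (1-g)/Dt * real (deg V E t) = sd t" unfolding sd_def using Dt_pos by (simp add: field_simps)
  finally show ?thesis .
qed

lemma pos_walk:
  assumes RV: "R' \<subseteq> V \<times> V" and Pc: "\<And>a b. (a,b) \<in> R' \<Longrightarrow> P g a b \<ge> c0" and c0: "c0 \<ge> 0"
    and g: "0 \<le> g" "g \<le> 1"
  shows "(x,y) \<in> R' ^^ n \<Longrightarrow> wd g x n y \<ge> c0 ^ n"
proof (induction n arbitrary: y)
  case 0 then show ?case by auto
next
  case (Suc n)
  then obtain z where z: "(x,z) \<in> R' ^^ n" "(z,y) \<in> R'" by (auto elim: relpow_Suc_E)
  have zV: "z \<in> V" using z(2) RV by auto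
  have "c0 ^ Suc n = c0 ^ n * c0" by simp
  also have "\<dots> \<le> wd g x n z * P g z y"
    using Suc.IH[OF z(1)] Pc[OF z(2)] c0 wd_nonneg[OF g] by (intro mult_mono) auto
  also have "\<dots> \<le> (\<Sum>s\<in>V. wd g x n s * P g s y)"
    using zV fin g by (intro member_le_sum) (auto intro!: mult_nonneg_nonneg wd_nonneg P_nonneg)
  finally show ?case by simp
qed

end

lemma conv_lemma:
  fixes e :: "nat \<Rightarrow> real"
  assumes nn: "\<And>k. e k \<ge> 0" and dec: "\<And>k. e (Suc k) \<le> e k"
    and contr: "\<And>k. e (k + L) \<le> \<rho> * e k" and r: "\<rho> < 1"
  shows "e \<longlonglongrightarrow> 0"
proof -
  have "decseq e" using dec by (simp add: decseq_Suc_iff)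
  then obtain l where l: "e \<longlonglongrightarrow> l" "\<forall>i. l \<le> e i" using decseq_convergent[of e 0] nn by blast
  have l0: "l \<ge> 0" using l(1) nn by (meson LIMSEQ_le_const)
  have "(\<lambda>k. e (k + L)) \<longlonglongrightarrow> l" using LIMSEQ_ignore_initial_segment[OF l(1)] .
  moreover have "(\<lambda>k. \<rho> * e k) \<longlonglongrightarrow> \<rho> * l" using l(1) by (intro tendsto_mult) auto
  ultimately have "l \<le> \<rho> * l" using contr by (intro LIMSEQ_le) auto
  then have "l = 0" using l0 r by (metis mult_le_cancel_right1 not_le order.antisym)
  then show ?thesis using l by simp
qed

context gr2 begin

lemma doeblin:
  fixes d :: "'a \<Rightarrow> real" and K :: "'a \<Rightarrow> 'a \<Rightarrow> real" and c :: real
  assumes dD: "\<And>x. x \<in> V \<Longrightarrow> x \<notin> D \<Longrightarrow> d x = 0" and d0: "(\<Sum>x\<in>V. d x) = 0"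
    and Kc: "\<And>x y. x \<in> D \<Longrightarrow> y \<in> V \<Longrightarrow> K x y \<ge> c * (if y \<in> A then 1 else 0)"
    and Krow: "\<And>x. x \<in> D \<Longrightarrow> (\<Sum>y\<in>V. K x y) = 1" and AV: "A \<subseteq> V"
  shows "(\<Sum>y\<in>V. \<bar>\<Sum>x\<in>V. d x * K x y\<bar>) \<le> (1 - c * card A) * (\<Sum>x\<in>V. \<bar>d x\<bar>)"
proof -
  define K' where "K' x y = K x y - c * (if y \<in> A then 1 else 0)" for x y
  have eq: "(\<Sum>x\<in>V. d x * K x y) = (\<Sum>x\<in>V. d x * K' x y)" for y
  proof -
    have "(\<Sum>x\<in>V. d x * K x y) = (\<Sum>x\<in>V. d x * K' x y) + (\<Sum>x\<in>V. d x) * (c * (if y \<in> A then 1 else 0))"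
      unfolding K'_def by (simp add: algebra_simps sum.distrib sum_distrib_right sum_subtractf sum_distrib_left)
    then show ?thesis using d0 by simp
  qed
  have ab: "\<bar>d x * K' x y\<bar> = \<bar>d x\<bar> * K' x y" if "x \<in> V" "y \<in> V" for x y
  proof (cases "x \<in> D")
    case True then show ?thesis using Kc[OF True that(2)] by (simp add: K'_def abs_mult)
  next
    case False then show ?thesis using dD that by simp
  qed
  have rowK': "\<bar>d x\<bar> * (\<Sum>y\<in>V. K' x y) = \<bar>d x\<bar> * (1 - c * card A)" if "x \<in> V" for x
  proof (cases "x \<in> D")
    case True
    have "(\<Sum>y\<in>V. K' x y) = (\<Sum>y\<in>V. K x y) - c * (\<Sum>y\<in>V. if y \<in> A then 1 else 0)"
      unfolding K'_def by (simp add: sum_subtractf sum_distrib_left)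
    also have "(\<Sum>y\<in>V. if y \<in> A then 1 else (0::real)) = card A"
      using AV fin by (simp add: sum.If_cases Int_absorb1)
    finally show ?thesis using Krow[OF True] by simp
  next
    case False then show ?thesis using dD that by simp
  qed
  have "(\<Sum>y\<in>V. \<bar>\<Sum>x\<in>V. d x * K x y\<bar>) \<le> (\<Sum>y\<in>V. \<Sum>x\<in>V. \<bar>d x * K' x y\<bar>)"
    unfolding eq by (intro sum_mono sum_abs)
  also have "\<dots> = (\<Sum>y\<in>V. \<Sum>x\<in>V. \<bar>d x\<bar> * K' x y)" using ab by simp
  also have "\<dots> = (\<Sum>x\<in>V. \<bar>d x\<bar> * (\<Sum>y\<in>V. K' x y))"
    by (subst sum.swap) (simp add: sum_distrib_left)
  also have "\<dots> = (\<Sum>x\<in>V. \<bar>d x\<bar> * (1 - c * card A))" using rowK' by (intro sum.cong) auto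
  finally show ?thesis by (simp add: sum_distrib_right mult.commute)
qed

end

lemma even_gap: "even (p::nat) \<Longrightarrow> p \<le> N \<Longrightarrow> even N \<Longrightarrow> \<exists>j. N = p + 2*j"
  by presburger

context gr2 begin

lemma conv_gen:
  fixes f :: "nat \<Rightarrow> 'a \<Rightarrow> real" and Dk :: "nat \<Rightarrow> 'a set"
  assumes stp: "\<And>k t. t \<in> V \<Longrightarrow> f (Suc k) t = (\<Sum>s\<in>V. f k s * P g s t)"
    and g: "0 \<le> g" "g \<le> 1"
    and supp: "\<And>k x. x \<in> V \<Longrightarrow> x \<notin> Dk k \<Longrightarrow> f k x = 0"
    and DkV: "\<And>k. Dk k \<subseteq> V" and Dne: "\<And>k. Dk k \<noteq> {}"
    and s0: "\<And>k. (\<Sum>x\<in>V. f k x) = 0"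
    and c: "c > 0" and pos: "\<And>k x y. x \<in> Dk k \<Longrightarrow> y \<in> Dk k \<Longrightarrow> wd g x L y \<ge> c"
  shows "(\<lambda>k. \<Sum>t\<in>V. \<bar>f k t\<bar>) \<longlonglongrightarrow> 0"
proof (rule conv_lemma)
  let ?e = "\<lambda>k. \<Sum>t\<in>V. \<bar>f k t\<bar>"
  show "?e k \<ge> 0" for k by (simp add: sum_nonneg)
  have ev: "f (k+n) t = (\<Sum>s\<in>V. f k s * wd g s n t)" if "t \<in> V" for k n t
    using evolve[of f g, OF stp that] by simp
  have Dk_sub: "x \<in> Dk k \<Longrightarrow> x \<in> V" for x k using DkV by auto
  show "?e (Suc k) \<le> ?e k" for k
  proof -
    have "?e (Suc k) = (\<Sum>y\<in>V. \<bar>\<Sum>x\<in>V. f k x * wd g x 1 y\<bar>)"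
      using ev[of _ k 1] by simp
    also have "\<dots> \<le> (1 - 0 * real (card ({}::'a set))) * ?e k"
      by (rule doeblin[where D="Dk k"]) (auto simp del: walk_dist.simps simp: supp s0 wd_nonneg[OF g] wd_row Dk_sub)
    finally show ?thesis by simp
  qed
  show "?e (k + L) \<le> (1 - c) * ?e k" for k
  proof -
    have "?e (k + L) = (\<Sum>y\<in>V. \<bar>\<Sum>x\<in>V. f k x * wd g x L y\<bar>)"
      using ev[of _ k L] by simp
    also have "\<dots> \<le> (1 - c * card (Dk k)) * ?e k"
      by (rule doeblin[where D="Dk k"]) (auto simp del: walk_dist.simps simp: supp s0 wd_nonneg[OF g] wd_row Dk_sub pos DkV)
    also have "\<dots> \<le> (1 - c) * ?e k"
    proof -
      have "card (Dk k) \<ge> 1" using Dne[of k] DkV[of k] fin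
        by (metis One_nat_def Suc_leI card_gt_0_iff finite_subset)
      then have "c \<le> c * card (Dk k)" using c by (simp add: mult_le_cancel_left1)
      then show ?thesis by (intro mult_right_mono) (auto simp: sum_nonneg)
    qed
    finally show ?thesis .
  qed
  show "1 - c < 1" using c by simp
qed

definition "bip \<longleftrightarrow> (\<exists>col::'a \<Rightarrow> bool. \<forall>x y. E x y \<longrightarrow> col x \<noteq> col y)"

lemma pad2: "(x,y) \<in> R ^^ n \<Longrightarrow> y \<in> V \<Longrightarrow> (x,y) \<in> R ^^ (n + 2*j)"
proof (induction j)
  case 0 then show ?case by simp
next
  case (Suc j)
  obtain z where z: "E y z" using nbr[OF Suc.prems(2)] by auto
  have "(x,z) \<in> R ^^ Suc (n + 2*j)" using Suc z by (auto intro: relpow_Suc_I simp: R_iff)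
  then have "(x,y) \<in> R ^^ Suc (Suc (n + 2*j))" using z Esym by (auto intro: relpow_Suc_I simp: R_iff)
  then show ?case by simp
qed

lemma parity: fixes col :: "'a \<Rightarrow> bool" assumes col: "\<forall>x y. E x y \<longrightarrow> col x \<noteq> col y"
  shows "(x,y) \<in> R ^^ n \<Longrightarrow> (col x = col y \<longleftrightarrow> even n)"
proof (induction n arbitrary: y)
  case 0 then show ?case by auto
next
  case (Suc n)
  then obtain z where z: "(x,z) \<in> R ^^ n" "(z,y) \<in> R" by (auto elim: relpow_Suc_E)
  have "col z \<noteq> col y" using z(2) col by (auto simp: R_iff)
  then show ?case using Suc.IH[OF z(1)] by (metis (full_types) even_Suc)
qed

lemma walks_nonbip: assumes "\<not> bip"
  shows "\<forall>x\<in>V. \<forall>y\<in>V. (x,y) \<in> R ^^ (4*Mx+2)"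
proof -
  obtain x0 where x0: "x0 \<in> V" using Vne by auto
  have "\<not> (\<forall>x y. E x y \<longrightarrow> even (gdist V E x0 x) \<noteq> even (gdist V E x0 y))"
  proof
    assume h: "\<forall>x y. E x y \<longrightarrow> even (gdist V E x0 x) \<noteq> even (gdist V E x0 y)"
    have bip unfolding bip_def by (rule exI[of _ "\<lambda>x. even (gdist V E x0 x)"]) (use h in simp)
    then show False using assms by simp
  qed
  then obtain a b where ab: "E a b" "even (gdist V E x0 a) = even (gdist V E x0 b)" by blast
  have aV: "a \<in> V" and bV: "b \<in> V" using EV[OF ab(1)] by auto
  let ?o = "gdist V E x0 a + 1 + gdist V E x0 b"
  have cyc: "(x0,x0) \<in> R ^^ ?o"
  proof -
    have "(x0,a) \<in> R ^^ gdist V E x0 a" using gdist_walk[OF x0 aV] .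
    then have "(x0,b) \<in> R ^^ (gdist V E x0 a + 1)" using ab(1) by (auto intro: relpow_Suc_I simp: R_iff)
    moreover have "(b,x0) \<in> R ^^ gdist V E x0 b" using relpow_sym[OF gdist_walk[OF x0 bV]] .
    ultimately show ?thesis by (rule relpow_trans)
  qed
  have oodd: "odd ?o" using ab(2) by auto
  have ole: "?o \<le> 2*Mx+1" using gdist_le[OF x0 aV] gdist_le[OF x0 bV] by simp
  show ?thesis
  proof (intro ballI)
    fix x y assume x: "x \<in> V" and y: "y \<in> V"
    let ?p = "gdist V E x x0 + gdist V E x0 y"
    have w1: "(x,x0) \<in> R ^^ gdist V E x x0" using gdist_walk[OF x x0] .
    have w2: "(x0,y) \<in> R ^^ gdist V E x0 y" using gdist_walk[OF x0 y] .
    have p: "(x,y) \<in> R ^^ ?p" using relpow_trans[OF w1 w2] .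
    have ple: "?p \<le> 2*Mx" using gdist_le[OF x x0] gdist_le[OF x0 y] by simp
    have q: "(x,y) \<in> R ^^ (gdist V E x x0 + ?o + gdist V E x0 y)"
      using relpow_trans[OF relpow_trans[OF w1 cyc] w2] .
    show "(x,y) \<in> R ^^ (4*Mx+2)"
    proof (cases "even ?p")
      case True
      then obtain j where j: "4*Mx+2 = ?p + 2*j" using ple even_gap[of ?p "4*Mx+2"] by auto
      show ?thesis unfolding j by (rule pad2[OF p y])
    next
      case False
      then have "even (gdist V E x x0 + ?o + gdist V E x0 y)" using oodd by auto
      moreover have "gdist V E x x0 + ?o + gdist V E x0 y \<le> 4*Mx+2" using ple ole by simp
      ultimately obtain j where j: "4*Mx+2 = (gdist V E x x0 + ?o + gdist V E x0 y) + 2*j"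
        using even_gap[of "gdist V E x x0 + ?o + gdist V E x0 y" "4*Mx+2"] by auto
      show ?thesis unfolding j by (rule pad2[OF q y])
    qed
  qed
qed

end

context gr2 begin

lemma relpow_sub: fixes A B :: "('a \<times> 'a) set" assumes AB: "A \<subseteq> B" shows "(x,y) \<in> A ^^ n \<Longrightarrow> (x,y) \<in> B ^^ n"
proof (induction n arbitrary: y)
  case 0 then show ?case by (metis relpow_0_E relpow_0_I)
next
  case (Suc n)
  from Suc.prems obtain z where z: "(x,z) \<in> A ^^ n" "(z,y) \<in> A" by (rule relpow_Suc_E)
  show ?case by (rule relpow_Suc_I[OF Suc.IH[OF z(1)]]) (use z(2) AB in auto)
qed

lemma pad_lazy: "(x,y) \<in> (R \<union> Id_on V) ^^ n \<Longrightarrow> y \<in> V \<Longrightarrow> (x,y) \<in> (R \<union> Id_on V) ^^ (n + j)"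
proof (induction j)
  case 0 then show ?case by simp
next
  case (Suc j)
  then have "(x,y) \<in> (R \<union> Id_on V) ^^ (n + j)" by simp
  moreover have "(y,y) \<in> R \<union> Id_on V" using Suc.prems by auto
  ultimately have "(x,y) \<in> (R \<union> Id_on V) ^^ Suc (n + j)" by (rule relpow_Suc_I)
  then show ?case by (metis add_Suc_right)
qed

lemma P_edge: assumes "E a b" "g \<le> 1" shows "P g a b \<ge> (1-g) / real (card V)"
proof -
  have aV: "a \<in> V" using EV assms by auto
  have "P g a b = (1-g) / real (deg V E a)" using assms(1) Eirr[of a] by (auto simp: P_split[OF aV])
  moreover have "real (deg V E a) \<le> real (card V)" using deg_le by simp
  moreover have "real (deg V E a) > 0" using deg_pos aV by simp
  ultimately show ?thesis using assms(2) by (simp add: frac_le)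
qed

lemma pos_all: assumes g: "0 \<le> g" "g < 1" and h: "g > 0 \<or> \<not> bip"
  shows "\<exists>L c. c > 0 \<and> (\<forall>x\<in>V. \<forall>y\<in>V. wd g x L y \<ge> c)"
proof -
  have cV: "real (card V) > 0" using two by simp
  show ?thesis
  proof (cases "g > 0")
    case True
    define c0 where "c0 = min g ((1-g) / real (card V))"
    have c0: "c0 > 0" using True g cV unfolding c0_def by simp
    have Pc: "P g a b \<ge> c0" if "(a,b) \<in> R \<union> Id_on V" for a b
    proof (cases "(a,b) \<in> R")
      case True then show ?thesis using P_edge[of a b g] g unfolding c0_def by (auto simp: R_iff)
    next
      case False
      then have "a = b" "a \<in> V" using that by auto
      then show ?thesis using P_split[of a g a] Eirr[of a] unfolding c0_def by simp
    qed
    have "\<forall>x\<in>V. \<forall>y\<in>V. wd g x (Mx+1) y \<ge> c0 ^ (Mx+1)"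
    proof (intro ballI)
      fix x y assume x: "x \<in> V" and y: "y \<in> V"
      have "(x,y) \<in> (R \<union> Id_on V) ^^ gdist V E x y"
        using relpow_sub[OF _ gdist_walk[OF x y]] by blast
      then have "(x,y) \<in> (R \<union> Id_on V) ^^ (gdist V E x y + (Mx + 1 - gdist V E x y))"
        using pad_lazy y by blast
      then have "(x,y) \<in> (R \<union> Id_on V) ^^ (Mx+1)" using gdist_le[OF x y] by simp
      moreover have RV: "R \<union> Id_on V \<subseteq> V \<times> V" by (auto simp: edge_rel_def)
      ultimately show "wd g x (Mx+1) y \<ge> c0 ^ (Mx+1)"
        using pos_walk[OF RV Pc less_imp_le[OF c0] g(1) less_imp_le[OF g(2)]] by blast
    qed
    then show ?thesis using c0 by (intro exI[of _ "Mx+1"] exI[of _ "c0^(Mx+1)"] conjI) (auto simp del: walk_dist.simps)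
  next
    case False
    then have nb: "\<not> bip" using h by auto
    define c0 where "c0 = (1-g) / real (card V)"
    have c0: "c0 > 0" using g cV unfolding c0_def by simp
    have "\<forall>x\<in>V. \<forall>y\<in>V. wd g x (4*Mx+2) y \<ge> c0 ^ (4*Mx+2)"
    proof (intro ballI)
      fix x y assume x: "x \<in> V" and y: "y \<in> V"
      have RV: "R \<subseteq> V \<times> V" by (auto simp: edge_rel_def)
      have Pc: "P g a b \<ge> c0" if "(a,b) \<in> R" for a b using P_edge[of a b g] that g by (auto simp: R_iff c0_def)
      show "wd g x (4*Mx+2) y \<ge> c0 ^ (4*Mx+2)"
        using pos_walk[OF RV Pc less_imp_le[OF c0] g(1) less_imp_le[OF g(2)]] walks_nonbip[OF nb] x y by blast
    qed
    then show ?thesis using c0 by (intro exI[of _ "4*Mx+2"] exI[of _ "c0^(4*Mx+2)"] conjI) (auto simp del: walk_dist.simps)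
  qed
qed

lemma conv_pi: assumes u: "u \<in> V" and g: "0 \<le> g" "g < 1" and h: "g > 0 \<or> \<not> bip"
  shows "(\<lambda>k. \<Sum>t\<in>V. \<bar>wd g u k t - sd t\<bar>) \<longlonglongrightarrow> 0"
proof -
  obtain L c where c: "c > 0" "\<forall>x\<in>V. \<forall>y\<in>V. wd g x L y \<ge> c" using pos_all[OF g h] by blast
  show ?thesis
  proof (rule conv_gen[where Dk="\<lambda>_. V" and g=g and c=c and L=L])
    fix k t assume t: "t \<in> V"
    have "(\<Sum>s\<in>V. (wd g u k s - sd s) * P g s t) = (\<Sum>s\<in>V. wd g u k s * P g s t) - (\<Sum>s\<in>V. sd s * P g s t)"
      by (simp add: left_diff_distrib sum_subtractf)
    then show "wd g u (Suc k) t - sd t = (\<Sum>s\<in>V. (wd g u k s - sd s) * P g s t)"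
      using sd_stat[OF t, of g] g by simp
  next
    show "(\<Sum>x\<in>V. wd g u k x - sd x) = 0" for k
      using wd_row[OF u] sd_sum by (simp add: sum_subtractf)
  qed (use c g Vne in \<open>auto simp del: walk_dist.simps\<close>)
qed

definition "sd2 A x = (if x \<in> A then 2 * sd x else 0)"

lemma half_deg: assumes AV: "A \<subseteq> V" and pr: "\<And>x y. E x y \<Longrightarrow> (x \<in> A \<longleftrightarrow> y \<notin> A)"
  shows "(\<Sum>x\<in>A. real (deg V E x)) = (\<Sum>x\<in>V-A. real (deg V E x))"
proof -
  have fA: "finite A" using AV fin finite_subset by blast
  have "(\<Sum>x\<in>A. real (deg V E x)) = (\<Sum>x\<in>A. \<Sum>y\<in>V. if E x y then 1 else 0)" by (simp add: deg_sum)
  also have "\<dots> = (\<Sum>y\<in>V. \<Sum>x\<in>A. if E x y then 1 else 0)" by (rule sum.swap)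
  also have "\<dots> = (\<Sum>y\<in>V. if y \<in> V - A then real (deg V E y) else 0)"
  proof (rule sum.cong[OF refl])
    fix y assume y: "y \<in> V"
    show "(\<Sum>x\<in>A. if E x y then 1 else 0) = (if y \<in> V - A then real (deg V E y) else 0)"
    proof (cases "y \<in> A")
      case True
      then have "\<And>x. x \<in> A \<Longrightarrow> \<not> E x y" using pr by blast
      then show ?thesis using True by simp
    next
      case False
      have "(\<Sum>x\<in>A. if E x y then 1 else 0) = (\<Sum>x\<in>V. if E x y then (1::real) else 0)"
      proof (rule sum.mono_neutral_left[OF fin AV])
        show "\<forall>i\<in>V - A. (if E i y then 1 else 0) = (0::real)" using pr False by auto
      qed
      then show ?thesis using False y by (simp add: deg_sum_in)
    qed
  qed
  also have "\<dots> = (\<Sum>y\<in>V-A. real (deg V E y))"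
  proof -
    have "V \<inter> {y. y \<in> V - A} = V - A" "V \<inter> {y. y \<notin> A} = V - A" by auto
    then show ?thesis using fin by (simp add: sum.If_cases)
  qed
  finally show ?thesis .
qed

lemma sd2_sum: assumes AV: "A \<subseteq> V" and pr: "\<And>x y. E x y \<Longrightarrow> (x \<in> A \<longleftrightarrow> y \<notin> A)"
  shows "(\<Sum>x\<in>V. sd2 A x) = 1" and "(\<Sum>x\<in>A. sd x) = 1/2"
proof -
  have e: "(\<Sum>x\<in>A. sd x) = (\<Sum>x\<in>V-A. sd x)"
    unfolding sd_def sum_divide_distrib[symmetric] using half_deg[OF AV pr] by simp
  have "(\<Sum>x\<in>A. sd x) + (\<Sum>x\<in>V-A. sd x) = 1"
    using sd_sum sum.subset_diff[OF AV fin, of sd] by simp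
  then show h: "(\<Sum>x\<in>A. sd x) = 1/2" using e by simp
  have "(\<Sum>x\<in>V. sd2 A x) = (\<Sum>x\<in>V \<inter> A. 2 * sd x)"
    unfolding sd2_def using fin by (simp add: sum.If_cases)
  also have "\<dots> = 2 * (\<Sum>x\<in>A. sd x)" using AV by (simp add: Int_absorb1 sum_distrib_left)
  finally show "(\<Sum>x\<in>V. sd2 A x) = 1" using h by simp
qed

lemma sd2_step: assumes AV: "A \<subseteq> V" and pr: "\<And>x y. E x y \<Longrightarrow> (x \<in> A \<longleftrightarrow> y \<notin> A)" and t: "t \<in> V"
  shows "(\<Sum>s\<in>V. sd2 A s * P 0 s t) = sd2 (V - A) t"
proof -
  have "\<And>s. s \<in> V \<Longrightarrow> sd2 A s * P 0 s t = (if s \<in> A \<and> E s t then 2 / Dt else 0)"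
  proof -
    fix s assume s: "s \<in> V"
    have d: "real (deg V E s) > 0" using deg_pos[OF s] by simp
    show "?thesis s" using d Dt_pos Eirr[of s] by (auto simp: P_split[OF s] sd2_def sd_def)
  qed
  then have "(\<Sum>s\<in>V. sd2 A s * P 0 s t) = (\<Sum>s\<in>V. if s \<in> A \<and> E s t then 2 / Dt else 0)" by simp
  also have "\<dots> = (if t \<in> V - A then 2 / Dt * real (deg V E t) else 0)"
  proof (cases "t \<in> A")
    case True
    then have "\<And>s. \<not> (s \<in> A \<and> E s t)" using pr by blast
    then show ?thesis using True by (auto intro!: sum.neutral)
  next
    case False
    then have "(\<Sum>s\<in>V. if s \<in> A \<and> E s t then 2 / Dt else 0) = (\<Sum>s\<in>V. 2 / Dt * (if E s t then 1 else 0))"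
      using pr by (intro sum.cong) auto
    then show ?thesis using False t by (simp add: deg_sum_in sum_distrib_left)
  qed
  also have "\<dots> = sd2 (V - A) t" unfolding sd2_def sd_def by simp
  finally show ?thesis .
qed

lemma wd0_walk: "wd 0 u k t \<noteq> 0 \<Longrightarrow> (u,t) \<in> R ^^ k"
proof (induction k arbitrary: t)
  case 0 then show ?case by (auto split: if_splits)
next
  case (Suc k)
  then obtain s where s: "s \<in> V" "wd 0 u k s * P 0 s t \<noteq> 0"
    by (auto elim: sum.not_neutral_contains_not_neutral)
  then have "E s t" using P_split[OF s(1), of 0 t] by (auto split: if_splits)
  have "(u,s) \<in> R ^^ k" using Suc.IH s(2) by auto
  then show ?case by (rule relpow_Suc_I) (use \<open>E s t\<close> in \<open>simp add: R_iff\<close>)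
qed

definition "Sk col u k = {x \<in> V. (col x = col u) = even k}"

lemma conv_bip: fixes col :: "'a \<Rightarrow> bool"
  assumes col: "\<forall>x y. E x y \<longrightarrow> col x \<noteq> col y" and u: "u \<in> V"
  shows "(\<lambda>k. \<Sum>t\<in>V. \<bar>wd 0 u k t - sd2 (Sk col u k) t\<bar>) \<longlonglongrightarrow> 0"
proof -
  have SV: "Sk col u k \<subseteq> V" for k unfolding Sk_def by auto
  have pr: "E x y \<Longrightarrow> (x \<in> Sk col u k \<longleftrightarrow> y \<notin> Sk col u k)" for x y k
    using col EV[of x y] unfolding Sk_def by auto
  have Ssuc: "Sk col u (Suc k) = V - Sk col u k" for k unfolding Sk_def by auto
  define c0 where "c0 = 1 / real (card V)"
  have c0: "c0 > 0" using two unfolding c0_def by simp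
  show ?thesis
  proof (rule conv_gen[where Dk="Sk col u" and g=0 and c="c0 ^ (2*Mx+2)" and L="2*Mx+2"])
    fix k t assume t: "t \<in> V"
    have "(\<Sum>s\<in>V. (wd 0 u k s - sd2 (Sk col u k) s) * P 0 s t) = (\<Sum>s\<in>V. wd 0 u k s * P 0 s t) - (\<Sum>s\<in>V. sd2 (Sk col u k) s * P 0 s t)"
      by (simp add: left_diff_distrib sum_subtractf)
    then show "wd 0 u (Suc k) t - sd2 (Sk col u (Suc k)) t = (\<Sum>s\<in>V. (wd 0 u k s - sd2 (Sk col u k) s) * P 0 s t)"
      using sd2_step[OF SV pr t, of k] Ssuc by simp
  next
    fix k :: nat and x :: 'a assume x: "x \<in> V" "x \<notin> Sk col u k"
    have "wd 0 u k x = 0"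
    proof (rule ccontr)
      assume "wd 0 u k x \<noteq> 0"
      then have "(u,x) \<in> R ^^ k" by (rule wd0_walk)
      then have "(col u = col x) = even k" by (rule parity[OF col])
      then show False using x unfolding Sk_def by auto
    qed
    then show "wd 0 u k x - sd2 (Sk col u k) x = 0" using x unfolding sd2_def by simp
  next
    show "(\<Sum>x\<in>V. wd 0 u k x - sd2 (Sk col u k) x) = 0" for k
      using wd_row[OF u] sd2_sum(1)[OF SV pr] by (simp add: sum_subtractf)
  next
    fix k
    show "Sk col u k \<noteq> {}"
    proof (cases "even k")
      case True then show ?thesis using u unfolding Sk_def by auto
    next
      case False
      obtain z where z: "E u z" using nbr[OF u] by auto
      then have "z \<in> Sk col u k" using col EV[OF z] False unfolding Sk_def by auto
      then show ?thesis by auto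
    qed
  next
    fix k x y assume xy: "x \<in> Sk col u k" "y \<in> Sk col u k"
    have xV: "x \<in> V" and yV: "y \<in> V" using xy SV by auto
    have cxy: "col x = col y" using xy unfolding Sk_def by auto
    have w: "(x,y) \<in> R ^^ gdist V E x y" using gdist_walk[OF xV yV] .
    have ev: "even (gdist V E x y)" using parity[OF col w] cxy by simp
    obtain j where j: "2*Mx+2 = gdist V E x y + 2*j"
      using even_gap[OF ev, of "2*Mx+2"] gdist_le[OF xV yV] by auto
    have "(x,y) \<in> R ^^ (2*Mx+2)" unfolding j by (rule pad2[OF w yV])
    moreover have RV: "R \<subseteq> V \<times> V" by (auto simp: edge_rel_def)
    moreover have Pc: "P 0 a b \<ge> c0" if "(a,b) \<in> R" for a b using P_edge[of a b 0] that by (auto simp: R_iff c0_def)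
    moreover have pw: "\<And>n x y. (x,y) \<in> R ^^ n \<Longrightarrow> c0^n \<le> wd 0 x n y"
      by (rule pos_walk[OF RV Pc]) (use c0 in auto)
    ultimately show "wd 0 x (2*Mx+2) y \<ge> c0 ^ (2*Mx+2)" by blast
  qed (use SV c0 in auto)
qed

end

context gr2 begin

abbreviation "cost T \<equiv> (\<Sum>x\<in>V. \<Sum>y\<in>V. real (gdist V E x y) * T x y)"

lemma cost_nonneg: "transport_plan V \<mu> \<nu> T \<Longrightarrow> cost T \<ge> 0"
  unfolding transport_plan_def by (auto intro!: sum_nonneg mult_nonneg_nonneg)

lemma W_upper: "transport_plan V \<mu> \<nu> T \<Longrightarrow> wasserstein V E \<mu> \<nu> \<le> cost T"
  unfolding wasserstein_def
  by (rule cInf_lower) (auto intro!: bdd_belowI[of _ 0] cost_nonneg)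

lemma ind_sum: "B \<subseteq> V \<Longrightarrow> (\<Sum>y\<in>V. (if y \<in> B then 1 else 0) * f y) = (\<Sum>y\<in>B. (f y::real))"
proof -
  assume BV: "B \<subseteq> V"
  have "(\<Sum>y\<in>V. (if y \<in> B then 1 else 0) * f y) = (\<Sum>y\<in>V. if y \<in> B then f y else 0)"
    by (intro sum.cong) auto
  also have "\<dots> = sum f (V \<inter> B)" by (rule sum.inter_restrict[OF fin, symmetric])
  finally show ?thesis using BV by (simp add: Int_absorb1)
qed

lemma W_lower:
  assumes mn: "\<And>x. x \<in> V \<Longrightarrow> \<mu> x \<ge> 0" "\<And>x. x \<in> V \<Longrightarrow> \<nu> x \<ge> 0"
    and s: "(\<Sum>x\<in>V. \<mu> x) = 1" "(\<Sum>x\<in>V. \<nu> x) = 1" and BV: "B \<subseteq> V"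
  shows "wasserstein V E \<mu> \<nu> \<ge> (\<Sum>x\<in>B. \<nu> x) - (\<Sum>x\<in>B. \<mu> x)"
  unfolding wasserstein_def
proof (rule cInf_greatest)
  have "transport_plan V \<mu> \<nu> (\<lambda>x y. \<mu> x * \<nu> y)"
    unfolding transport_plan_def using mn s by (auto simp: sum_distrib_left[symmetric] sum_distrib_right[symmetric])
  then show "(\<lambda>T. cost T) ` {T. transport_plan V \<mu> \<nu> T} \<noteq> {}" by auto
next
  fix c assume "c \<in> (\<lambda>T. cost T) ` {T. transport_plan V \<mu> \<nu> T}"
  then obtain T where T: "transport_plan V \<mu> \<nu> T" and c: "c = cost T" by auto
  let ?i = "\<lambda>x. if x \<in> B then 1 else (0::real)"
  have "cost T \<ge> (\<Sum>x\<in>V. \<Sum>y\<in>V. (?i y - ?i x) * T x y)"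
  proof (intro sum_mono)
    fix x y assume x: "x \<in> V" and y: "y \<in> V"
    have "?i y - ?i x \<le> real (gdist V E x y)"
    proof (cases "x = y")
      case True then show ?thesis by (simp add: gdist_refl)
    next
      case False then show ?thesis using gdist_pos[OF x y] by auto
    qed
    then show "(?i y - ?i x) * T x y \<le> real (gdist V E x y) * T x y"
      using T x y unfolding transport_plan_def by (intro mult_right_mono) auto
  qed
  also have "(\<Sum>x\<in>V. \<Sum>y\<in>V. (?i y - ?i x) * T x y) = (\<Sum>y\<in>V. ?i y * (\<Sum>x\<in>V. T x y)) - (\<Sum>x\<in>V. ?i x * (\<Sum>y\<in>V. T x y))"
    by (simp add: left_diff_distrib sum_subtractf sum_distrib_left) (rule sum.swap)
  also have "\<dots> = (\<Sum>y\<in>V. ?i y * \<nu> y) - (\<Sum>x\<in>V. ?i x * \<mu> x)"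
    using T unfolding transport_plan_def by simp
  also have "\<dots> = (\<Sum>x\<in>B. \<nu> x) - (\<Sum>x\<in>B. \<mu> x)"
    using ind_sum[OF BV, of \<nu>] ind_sum[OF BV, of \<mu>] by simp
  finally show "(\<Sum>x\<in>B. \<nu> x) - (\<Sum>x\<in>B. \<mu> x) \<le> c" using c by simp
qed

lemma W_tv:
  assumes mn: "\<And>x. x \<in> V \<Longrightarrow> \<mu> x \<ge> 0" "\<And>x. x \<in> V \<Longrightarrow> \<nu> x \<ge> 0"
    and s: "(\<Sum>x\<in>V. \<mu> x) = 1" "(\<Sum>x\<in>V. \<nu> x) = 1"
  shows "wasserstein V E \<mu> \<nu> \<le> real Mx * (\<Sum>x\<in>V. \<bar>\<mu> x - \<nu> x\<bar>)"
proof -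
  define m where "m x = min (\<mu> x) (\<nu> x)" for x
  define r where "r = (\<Sum>x\<in>V. \<mu> x - m x)"
  have r2: "(\<Sum>x\<in>V. \<nu> x - m x) = r" unfolding r_def using s by (simp add: sum_subtractf)
  have a0: "\<mu> x - m x \<ge> 0" "\<nu> x - m x \<ge> 0" for x unfolding m_def by auto
  have rz: "r = 0 \<Longrightarrow> x \<in> V \<Longrightarrow> \<mu> x - m x = 0" for x
    using sum_nonneg_eq_0_iff[OF fin, of "\<lambda>x. \<mu> x - m x"] a0 unfolding r_def by auto
  have rz2: "r = 0 \<Longrightarrow> x \<in> V \<Longrightarrow> \<nu> x - m x = 0" for x
    using sum_nonneg_eq_0_iff[OF fin, of "\<lambda>x. \<nu> x - m x"] a0 r2 by auto
  define T where "T x y = (if x = y then m x else 0) + (\<mu> x - m x) * (\<nu> y - m y) / r" for x y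
  have plan: "transport_plan V \<mu> \<nu> T"
    unfolding transport_plan_def
  proof (intro conjI ballI)
    fix x y assume "x \<in> V" "y \<in> V"
    have "m x \<ge> 0" using mn \<open>x \<in> V\<close> unfolding m_def by auto
    moreover have "r \<ge> 0" unfolding r_def using a0 by (simp add: sum_nonneg)
    ultimately show "T x y \<ge> 0" unfolding T_def using a0 by (auto intro!: divide_nonneg_nonneg)
  next
    fix x assume x: "x \<in> V"
    have "(\<Sum>y\<in>V. T x y) = m x + (\<mu> x - m x) * (\<Sum>y\<in>V. \<nu> y - m y) / r"
      unfolding T_def using x fin by (simp add: sum.distrib sum_divide_distrib[symmetric] sum_distrib_left)
    also have "\<dots> = \<mu> x" using rz[OF _ x] r2 by (cases "r = 0") auto
    finally show "(\<Sum>y\<in>V. T x y) = \<mu> x" .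
  next
    fix y assume y: "y \<in> V"
    have "(\<Sum>x\<in>V. T x y) = m y + (\<Sum>x\<in>V. \<mu> x - m x) * (\<nu> y - m y) / r"
      unfolding T_def using y fin by (simp add: sum.distrib sum_divide_distrib[symmetric] sum_distrib_right)
    also have "\<dots> = \<nu> y" using rz2[OF _ y] unfolding r_def[symmetric] by (cases "r = 0") auto
    finally show "(\<Sum>x\<in>V. T x y) = \<nu> y" .
  qed
  have "cost T = (\<Sum>x\<in>V. \<Sum>y\<in>V. real (gdist V E x y) * ((\<mu> x - m x) * (\<nu> y - m y) / r))"
  proof (intro sum.cong refl)
    fix x y
    show "real (gdist V E x y) * T x y = real (gdist V E x y) * ((\<mu> x - m x) * (\<nu> y - m y) / r)"
      unfolding T_def by (cases "x = y") (auto simp: gdist_refl)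
  qed
  also have "\<dots> \<le> (\<Sum>x\<in>V. \<Sum>y\<in>V. real Mx * ((\<mu> x - m x) * (\<nu> y - m y) / r))"
  proof (intro sum_mono mult_right_mono)
    fix x y assume "x \<in> V" "y \<in> V"
    then show "real (gdist V E x y) \<le> real Mx" using gdist_le by simp
    have "r \<ge> 0" unfolding r_def using a0 by (simp add: sum_nonneg)
    then show "0 \<le> (\<mu> x - m x) * (\<nu> y - m y) / r" using a0 by simp
  qed
  also have "\<dots> = real Mx * ((\<Sum>x\<in>V. \<mu> x - m x) * (\<Sum>y\<in>V. \<nu> y - m y) / r)"
    by (simp add: sum_distrib_left sum_distrib_right sum_divide_distrib) (rule sum.swap)
  also have "\<dots> = real Mx * (r * r / r)" using r2 unfolding r_def by simp
  also have "\<dots> \<le> real Mx * r" by (cases "r = 0") auto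
  also have "\<dots> \<le> real Mx * (\<Sum>x\<in>V. \<bar>\<mu> x - \<nu> x\<bar>)"
    unfolding r_def by (intro mult_left_mono sum_mono) (auto simp: m_def)
  finally show ?thesis using W_upper[OF plan] by simp
qed

end

context gr2 begin

definition "ind a x = (if x = a then 1 else (0::real))"
definition rs :: "('a \<Rightarrow> 'a \<Rightarrow> real) \<Rightarrow> 'a \<Rightarrow> real" where "rs F x = (\<Sum>y\<in>V. F x y)"
definition cs :: "('a \<Rightarrow> 'a \<Rightarrow> real) \<Rightarrow> 'a \<Rightarrow> real" where "cs F y = (\<Sum>x\<in>V. F x y)"
definition "suppok A F \<longleftrightarrow> (\<forall>x y. F x y \<noteq> (0::real) \<longrightarrow> x \<in> A \<and> E x y)"

lemma ind_sum_V: "b \<in> V \<Longrightarrow> (\<Sum>y\<in>V. ind b y) = 1"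
  unfolding ind_def using fin by simp

lemma rs_e: "b \<in> V \<Longrightarrow> rs (\<lambda>x y. ind a x * ind b y) x = ind a x"
  unfolding rs_def by (simp add: sum_distrib_left[symmetric] ind_sum_V)
lemma cs_e: "a \<in> V \<Longrightarrow> cs (\<lambda>x y. ind a x * ind b y) y = ind b y"
  unfolding cs_def by (simp add: sum_distrib_right[symmetric] ind_sum_V)

lemma rs_plus: "rs (\<lambda>x y. F x y + G x y) x = rs F x + rs G x"
  unfolding rs_def by (simp add: sum.distrib)
lemma rs_minus: "rs (\<lambda>x y. F x y - G x y) x = rs F x - rs G x"
  unfolding rs_def by (simp add: sum_subtractf)
lemma cs_plus: "cs (\<lambda>x y. F x y + G x y) y = cs F y + cs G y"
  unfolding cs_def by (simp add: sum.distrib)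
lemma cs_minus: "cs (\<lambda>x y. F x y - G x y) y = cs F y - cs G y"
  unfolding cs_def by (simp add: sum_subtractf)
lemma rs_lin: fixes F :: "'b \<Rightarrow> 'a \<Rightarrow> 'a \<Rightarrow> real" shows "rs (\<lambda>x y. \<Sum>s\<in>S. c s * F s x y) x = (\<Sum>s\<in>S. c s * rs (F s) x)"
  unfolding rs_def by (subst sum.swap) (simp add: sum_distrib_left)
lemma cs_lin: fixes F :: "'b \<Rightarrow> 'a \<Rightarrow> 'a \<Rightarrow> real" shows "cs (\<lambda>x y. \<Sum>s\<in>S. c s * F s x y) y = (\<Sum>s\<in>S. c s * cs (F s) y)"
  unfolding cs_def by (subst sum.swap) (simp add: sum_distrib_left)
lemma rs_scale: "rs (\<lambda>x y. c * F x y) x = c * rs F x"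
  unfolding rs_def by (simp add: sum_distrib_left)
lemma cs_scale: "cs (\<lambda>x y. c * F x y) y = c * cs F y"
  unfolding cs_def by (simp add: sum_distrib_left)

lemma path_flow:
  assumes AV: "A \<subseteq> V" and pr: "\<And>x y. E x y \<Longrightarrow> (x \<in> A \<longleftrightarrow> y \<notin> A)" and s: "s \<in> A"
  shows "(s,z) \<in> R ^^ n \<Longrightarrow> \<exists>G. suppok A G \<and>
     (\<forall>x\<in>A. rs G x = ind s x - (if z \<in> A then ind z x else 0)) \<and>
     (\<forall>y\<in>V-A. cs G y = (if z \<notin> A then ind z y else 0))"
proof (induction n arbitrary: z)
  case 0
  then have "z = s" by (metis relpow_0_E)
  then show ?case using s by (intro exI[of _ "\<lambda>x y. 0"]) (auto simp: suppok_def rs_def cs_def)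
next
  case (Suc n)
  from Suc.prems obtain z' where z': "(s,z') \<in> R ^^ n" "(z',z) \<in> R" by (rule relpow_Suc_E)
  have e: "E z' z" using z'(2) by (simp add: R_iff)
  have zV: "z \<in> V" "z' \<in> V" using EV[OF e] by auto
  obtain G where G: "suppok A G" "\<forall>x\<in>A. rs G x = ind s x - (if z' \<in> A then ind z' x else 0)"
     "\<forall>y\<in>V-A. cs G y = (if z' \<notin> A then ind z' y else 0)" using Suc.IH[OF z'(1)] by blast
  show ?case
  proof (cases "z' \<in> A")
    case True
    then have zA: "z \<notin> A" using pr[OF e] by simp
    define G' where "G' x y = G x y + ind z' x * ind z y" for x y
    have "suppok A G'" using G(1) True e unfolding suppok_def G'_def ind_def by auto
    moreover have "\<forall>x\<in>A. rs G' x = ind s x - (if z \<in> A then ind z x else 0)"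
      unfolding G'_def using G(2) True zA rs_e[OF zV(1)] by (simp add: rs_plus)
    moreover have "\<forall>y\<in>V-A. cs G' y = (if z \<notin> A then ind z y else 0)"
      unfolding G'_def using G(3) True zA cs_e[OF zV(2)] by (simp add: cs_plus)
    ultimately show ?thesis by blast
  next
    case False
    then have zA: "z \<in> A" using pr[OF e] by simp
    define G' where "G' x y = G x y - ind z x * ind z' y" for x y
    have "suppok A G'" using G(1) zA e Esym unfolding suppok_def G'_def ind_def by auto
    moreover have "\<forall>x\<in>A. rs G' x = ind s x - (if z \<in> A then ind z x else 0)"
      unfolding G'_def using G(2) False zA rs_e[OF zV(2)] by (simp add: rs_minus)
    moreover have "\<forall>y\<in>V-A. cs G' y = (if z \<notin> A then ind z y else 0)"
      unfolding G'_def using G(3) False zA cs_e[OF zV(1)] by (simp add: cs_minus)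
    ultimately show ?thesis by blast
  qed
qed

lemma flow:
  assumes AV: "A \<subseteq> V" and pr: "\<And>x y. E x y \<Longrightarrow> (x \<in> A \<longleftrightarrow> y \<notin> A)"
    and x0: "x0 \<in> A" and y0: "y0 \<in> V - A"
  shows "\<exists>\<delta>>0. \<forall>a b. (\<Sum>x\<in>A. \<bar>a x - sd x\<bar>) + (\<Sum>y\<in>V-A. \<bar>b y - sd y\<bar>) < \<delta> \<longrightarrow>
     (\<Sum>x\<in>A. a x) = (\<Sum>y\<in>V-A. b y) \<longrightarrow>
     (\<exists>w. suppok A w \<and> (\<forall>x y. w x y \<ge> 0) \<and> (\<forall>x\<in>A. rs w x = a x) \<and> (\<forall>y\<in>V-A. cs w y = b y))"
proof -
  have fA: "finite A" using AV fin finite_subset by blast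
  have "\<forall>p\<in>A \<times> (V-A). \<exists>G. suppok A G \<and> (\<forall>x\<in>A. rs G x = ind (fst p) x) \<and> (\<forall>y\<in>V-A. cs G y = ind (snd p) y)"
  proof
    fix p assume p: "p \<in> A \<times> (V-A)"
    then have "fst p \<in> V" "snd p \<in> V" "fst p \<in> A" "snd p \<notin> A" using AV by auto
    then have "(fst p, snd p) \<in> R ^^ gdist V E (fst p) (snd p)" using gdist_walk by blast
    from path_flow[OF AV pr \<open>fst p \<in> A\<close> this] \<open>snd p \<notin> A\<close>
    show "\<exists>G. suppok A G \<and> (\<forall>x\<in>A. rs G x = ind (fst p) x) \<and> (\<forall>y\<in>V-A. cs G y = ind (snd p) y)"
      by simp
  qed
  then obtain GG where GG: "\<And>p. p \<in> A \<times> (V-A) \<Longrightarrow> suppok A (GG p) \<and> (\<forall>x\<in>A. rs (GG p) x = ind (fst p) x) \<and> (\<forall>y\<in>V-A. cs (GG p) y = ind (snd p) y)"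
    by metis
  define C where "C = Max ((\<lambda>(p,x,y). \<bar>GG p x y\<bar>) ` ((A \<times> (V-A)) \<times> V \<times> V))"
  have finC: "finite ((\<lambda>(p,x,y). \<bar>GG p x y\<bar>) ` ((A \<times> (V-A)) \<times> V \<times> V))" using fA fin by auto
  have x0V: "x0 \<in> V" and y0V: "y0 \<in> V" using x0 y0 AV by auto
  have C0: "C \<ge> 0"
  proof -
    have "\<bar>GG (x0,y0) x0 y0\<bar> \<le> C" unfolding C_def
      by (rule Max_ge[OF finC]) (use x0 y0 x0V y0V in force)
    then show ?thesis by linarith
  qed
  have Cb: "\<bar>GG p x y\<bar> \<le> C" if p: "p \<in> A \<times> (V-A)" for p x y
  proof (cases "x \<in> V \<and> y \<in> V")
    case True
    show ?thesis unfolding C_def by (rule Max_ge[OF finC]) (use p True in force)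
  next
    case False
    then have "GG p x y = 0" using GG[OF p] EV unfolding suppok_def by blast
    then show ?thesis using C0 by simp
  qed
  have G0: "GG p x y = 0" if "p \<in> A \<times> (V-A)" "\<not> (x \<in> A \<and> E x y)" for p x y
    using GG[OF that(1)] that(2) unfolding suppok_def by blast
  define \<delta> where "\<delta> = 1 / (Dt * (2*C+1))"
  have \<delta>: "\<delta> > 0" unfolding \<delta>_def using Dt_pos C0 by simp
  have prc: "E x y \<Longrightarrow> (x \<in> V - A \<longleftrightarrow> y \<notin> V - A)" for x y using pr EV by blast
  have hA: "(\<Sum>x\<in>A. sd x) = 1/2" using sd2_sum(2)[OF AV pr] .
  have hB: "(\<Sum>x\<in>V-A. sd x) = 1/2" using sd2_sum(2)[of "V-A"] prc by blast
  show ?thesis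
  proof (intro exI[of _ \<delta>] conjI \<delta> allI impI)
    fix a b :: "'a \<Rightarrow> real"
    assume small: "(\<Sum>x\<in>A. \<bar>a x - sd x\<bar>) + (\<Sum>y\<in>V-A. \<bar>b y - sd y\<bar>) < \<delta>"
      and eqs: "(\<Sum>x\<in>A. a x) = (\<Sum>y\<in>V-A. b y)"
    define \<alpha> where "\<alpha> s = a s - sd s" for s
    define \<beta> where "\<beta> t = b t - sd t" for t
    define \<sigma> where "\<sigma> = (\<Sum>s\<in>A. \<alpha> s)"
    have sb: "(\<Sum>t\<in>V-A. \<beta> t) = \<sigma>"
      unfolding \<beta>_def \<sigma>_def \<alpha>_def using eqs hA hB by (simp add: sum_subtractf)
    define base where "base x y = (if x \<in> A \<and> E x y then 1/Dt else 0)" for x y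
    define corr where "corr x y = (\<Sum>s\<in>A. \<alpha> s * GG (s,y0) x y) + (\<Sum>t\<in>V-A. \<beta> t * GG (x0,t) x y) - \<sigma> * GG (x0,y0) x y" for x y
    define w where "w x y = base x y + corr x y" for x y
    have corr0: "corr x y = 0" if "\<not> (x \<in> A \<and> E x y)" for x y
      unfolding corr_def using G0[OF _ that] x0 y0 by (auto intro!: sum.neutral)
    have corrb: "\<bar>corr x y\<bar> \<le> 1/Dt" for x y
    proof -
      let ?sa = "\<Sum>s\<in>A. \<bar>\<alpha> s\<bar>" and ?sb = "\<Sum>t\<in>V-A. \<bar>\<beta> t\<bar>"
      have "\<bar>\<Sum>s\<in>A. \<alpha> s * GG (s,y0) x y\<bar> \<le> (\<Sum>s\<in>A. \<bar>\<alpha> s\<bar> * C)"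
        by (rule order_trans[OF sum_abs]) (auto intro!: sum_mono mult_left_mono Cb simp: abs_mult y0V y0[simplified])
      also have "\<dots> = C * ?sa" by (simp add: sum_distrib_left mult.commute)
      finally have t1: "\<bar>\<Sum>s\<in>A. \<alpha> s * GG (s,y0) x y\<bar> \<le> C * ?sa" .
      have "\<bar>\<Sum>t\<in>V-A. \<beta> t * GG (x0,t) x y\<bar> \<le> (\<Sum>t\<in>V-A. \<bar>\<beta> t\<bar> * C)"
        by (rule order_trans[OF sum_abs]) (auto intro!: sum_mono mult_left_mono Cb simp: abs_mult x0)
      also have "\<dots> = C * ?sb" by (simp add: sum_distrib_left mult.commute)
      finally have t2: "\<bar>\<Sum>t\<in>V-A. \<beta> t * GG (x0,t) x y\<bar> \<le> C * ?sb" .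
      have "\<bar>\<sigma>\<bar> \<le> ?sa" unfolding \<sigma>_def by (rule sum_abs)
      then have t3: "\<bar>\<sigma> * GG (x0,y0) x y\<bar> \<le> ?sa * C"
        unfolding abs_mult using Cb[of "(x0,y0)" x y] x0 y0 C0 by (intro mult_mono) auto
      have "\<bar>corr x y\<bar> \<le> C * ?sa + C * ?sb + ?sa * C" unfolding corr_def using t1 t2 t3 by linarith
      also have "\<dots> \<le> 2 * C * (?sa + ?sb)" using C0 by (simp add: algebra_simps sum_nonneg)
      also have "\<dots> \<le> 2 * C * \<delta>" using small C0 unfolding \<alpha>_def \<beta>_def by (intro mult_left_mono) auto
      also have "\<dots> = (2*C/(2*C+1)) * (1/Dt)" unfolding \<delta>_def using Dt_pos C0 by simp
      also have "\<dots> \<le> 1 * (1/Dt)" using Dt_pos C0 by (intro mult_right_mono) auto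
      also have "\<dots> = 1 / Dt" by simp
      finally show ?thesis .
    qed
    have "suppok A w" unfolding suppok_def w_def using corr0 by (auto simp: base_def)
    moreover have "\<forall>x y. w x y \<ge> 0"
    proof (intro allI)
      fix x y show "w x y \<ge> 0"
      proof (cases "x \<in> A \<and> E x y")
        case True then show ?thesis using corrb[of x y] unfolding w_def base_def by auto
      next
        case False then show ?thesis using corr0[OF False] unfolding w_def base_def by auto
      qed
    qed
    moreover have "\<forall>x\<in>A. rs w x = a x"
    proof
      fix x assume x: "x \<in> A"
      have "rs base x = sd x"
      proof -
        have "rs base x = (\<Sum>y\<in>V. (if E x y then 1 else 0) / Dt)"
          unfolding rs_def base_def using x by (intro sum.cong) auto
        then show ?thesis unfolding sd_def by (simp add: deg_sum sum_divide_distrib[symmetric])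
      qed
      moreover have "rs corr x = \<alpha> x"
      proof -
        have "rs corr x = (\<Sum>s\<in>A. \<alpha> s * ind s x) + (\<Sum>t\<in>V-A. \<beta> t * ind x0 x) - \<sigma> * ind x0 x"
          unfolding corr_def[abs_def] rs_minus rs_plus rs_lin rs_scale using GG x x0 y0 by simp
        also have "(\<Sum>s\<in>A. \<alpha> s * ind s x) = \<alpha> x" using x fA unfolding ind_def by (simp add: if_distrib cong: if_cong)
        also have "(\<Sum>t\<in>V-A. \<beta> t * ind x0 x) = \<sigma> * ind x0 x" using sb by (simp add: sum_distrib_right[symmetric])
        finally show ?thesis by simp
      qed
      ultimately show "rs w x = a x" unfolding w_def[abs_def] rs_plus \<alpha>_def by simp
    qed
    moreover have "\<forall>y\<in>V-A. cs w y = b y"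
    proof
      fix y assume y: "y \<in> V-A"
      have "cs base y = sd y"
      proof -
        have "cs base y = (\<Sum>x\<in>V. (if E x y then 1 else 0) / Dt)"
          unfolding cs_def base_def using y pr by (intro sum.cong) auto
        then show ?thesis unfolding sd_def by (simp add: deg_sum_in sum_divide_distrib[symmetric])
      qed
      moreover have "cs corr y = \<beta> y"
      proof -
        have "cs corr y = (\<Sum>s\<in>A. \<alpha> s * ind y0 y) + (\<Sum>t\<in>V-A. \<beta> t * ind t y) - \<sigma> * ind y0 y"
          unfolding corr_def[abs_def] cs_minus cs_plus cs_lin cs_scale using GG y x0 y0 by simp
        also have "(\<Sum>t\<in>V-A. \<beta> t * ind t y) = \<beta> y" using y fin unfolding ind_def by (simp add: if_distrib cong: if_cong)
        also have "(\<Sum>s\<in>A. \<alpha> s * ind y0 y) = \<sigma> * ind y0 y" unfolding \<sigma>_def by (simp add: sum_distrib_right[symmetric])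
        finally show ?thesis by simp
      qed
      ultimately show "cs w y = b y" unfolding w_def[abs_def] cs_plus \<beta>_def by simp
    qed
    ultimately show "\<exists>w. suppok A w \<and> (\<forall>x y. w x y \<ge> 0) \<and> (\<forall>x\<in>A. rs w x = a x) \<and> (\<forall>y\<in>V-A. cs w y = b y)"
      by blast
  qed
qed

end

context gr2 begin

lemma Sk_sub: "Sk col u k \<subseteq> V" unfolding Sk_def by auto

lemma Sk_pr: fixes col :: "'a \<Rightarrow> bool" assumes col: "\<forall>x y. E x y \<longrightarrow> col x \<noteq> col y"
  shows "E x y \<Longrightarrow> (x \<in> Sk col u k \<longleftrightarrow> y \<notin> Sk col u k)"
  using col EV[of x y] unfolding Sk_def by auto

lemma supp_bip: fixes col :: "'a \<Rightarrow> bool" assumes col: "\<forall>x y. E x y \<longrightarrow> col x \<noteq> col y"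
  shows "x \<notin> Sk col w k \<Longrightarrow> x \<in> V \<Longrightarrow> wd 0 w k x = 0"
proof (rule ccontr)
  assume x: "x \<notin> Sk col w k" "x \<in> V" and "wd 0 w k x \<noteq> 0"
  then have "(w,x) \<in> R ^^ k" by (intro wd0_walk)
  then have "(col w = col x) = even k" by (rule parity[OF col])
  then show False using x unfolding Sk_def by auto
qed

lemma class_step: fixes col :: "'a \<Rightarrow> bool" assumes col: "\<forall>x y. E x y \<longrightarrow> col x \<noteq> col y"
  and s: "s \<in> V"
  shows "(\<Sum>t\<in>{x\<in>V. col x = b0}. P g s t) = (if col s = b0 then g else 1 - g)"
proof -
  let ?B = "{x\<in>V. col x = b0}"
  have fB: "finite ?B" using fin by auto
  have "(\<Sum>t\<in>?B. P g s t) = (\<Sum>t\<in>?B. if s = t then g else 0) + (\<Sum>t\<in>?B. if E s t then (1-g)/real (deg V E s) else 0)"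
    using s by (simp add: P_split sum.distrib)
  also have "(\<Sum>t\<in>?B. if s = t then g else 0) = (if col s = b0 then g else 0)"
    using s fB by (auto simp: sum.delta)
  also have "(\<Sum>t\<in>?B. if E s t then (1-g)/real (deg V E s) else 0) = (if col s = b0 then 0 else 1 - g)"
  proof (cases "col s = b0")
    case True
    then have "\<And>t. t \<in> ?B \<Longrightarrow> \<not> E s t" using col by auto
    then show ?thesis using True by simp
  next
    case False
    have "(\<Sum>t\<in>?B. if E s t then (1-g)/real (deg V E s) else 0) = (\<Sum>t\<in>V. if E s t then (1-g)/real (deg V E s) else 0)"
      by (rule sum.mono_neutral_left[OF fin]) (use False col in auto)
    also have "\<dots> = (1-g)/real (deg V E s) * (\<Sum>t\<in>V. if E s t then 1 else 0)"
      by (simp add: sum_distrib_left if_distrib cong: if_cong)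
    also have "\<dots> = 1 - g" using deg_pos[OF s] by (simp add: deg_sum[symmetric])
    finally show ?thesis using False by simp
  qed
  finally show ?thesis by simp
qed

lemma class_sum: fixes col :: "'a \<Rightarrow> bool" assumes col: "\<forall>x y. E x y \<longrightarrow> col x \<noteq> col y"
  and v: "v \<in> V" and g: "0 \<le> g" "g \<le> 1"
  shows "\<bar>(\<Sum>x\<in>{x\<in>V. col x = b0}. wd g v k x) - 1/2\<bar> = 1/2 * \<bar>2*g-1\<bar>^k"
proof (induction k)
  case 0
  have fB: "finite {x\<in>V. col x = b0}" using fin by auto
  show ?case using v fB by (auto simp: sum.delta)
next
  case (Suc k)
  let ?B = "{x\<in>V. col x = b0}"
  have "(\<Sum>t\<in>?B. wd g v (Suc k) t) = (\<Sum>s\<in>V. wd g v k s * (\<Sum>t\<in>?B. P g s t))"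
    by (simp add: sum_distrib_left) (rule sum.swap)
  also have "\<dots> = (\<Sum>s\<in>V. wd g v k s * (1 - g) + wd g v k s * (if s \<in> ?B then 2*g-1 else 0))"
    using class_step[OF col] by (intro sum.cong) (auto simp: algebra_simps)
  also have "\<dots> = (1-g) + (2*g-1) * (\<Sum>s\<in>?B. wd g v k s)"
  proof -
    have "(\<Sum>s\<in>V. wd g v k s * (if s \<in> ?B then 2*g-1 else 0)) = (\<Sum>s\<in>V. if s \<in> ?B then (2*g-1) * wd g v k s else 0)"
      by (intro sum.cong) auto
    also have "\<dots> = (\<Sum>s\<in>V \<inter> ?B. (2*g-1) * wd g v k s)" by (rule sum.inter_restrict[OF fin, symmetric])
    also have "V \<inter> ?B = ?B" by auto
    finally show ?thesis using wd_row[OF v] by (simp add: sum.distrib sum_distrib_right[symmetric] sum_distrib_left[symmetric])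
  qed
  finally have "(\<Sum>t\<in>?B. wd g v (Suc k) t) - 1/2 = (2*g-1) * ((\<Sum>s\<in>?B. wd g v k s) - 1/2)"
    by (simp add: algebra_simps)
  then show ?case using Suc.IH by (simp add: abs_mult)
qed

lemma main_case: fixes col :: "'a \<Rightarrow> bool" assumes col: "\<forall>x y. E x y \<longrightarrow> col x \<noteq> col y"
  and u: "u \<in> V" and v: "v \<in> V" and b: "0 < b" "b < 1"
  shows "\<exists>N. \<forall>k\<ge>N. wasserstein V E (wd 0 u k) (wd b v k) = (\<Sum>y\<in>V - Sk col u k. wd b v k y)"
proof -
  let ?S = "Sk col u"
  define good where "good k d \<longleftrightarrow> (\<forall>a bb. (\<Sum>x\<in>?S k. \<bar>a x - sd x\<bar>) + (\<Sum>y\<in>V - ?S k. \<bar>bb y - sd y\<bar>) < d \<longrightarrow>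
     (\<Sum>x\<in>?S k. a x) = (\<Sum>y\<in>V - ?S k. bb y) \<longrightarrow>
     (\<exists>w. suppok (?S k) w \<and> (\<forall>x y. w x y \<ge> 0) \<and> (\<forall>x\<in>?S k. rs w x = a x) \<and> (\<forall>y\<in>V - ?S k. cs w y = bb y)))" for k :: nat and d
  have flowS: "\<exists>\<delta>>0. good j \<delta>" for j
  proof -
    obtain z where z: "E u z" using nbr[OF u] by auto
    have zV: "z \<in> V" using EV[OF z] by auto
    have cz: "col z \<noteq> col u" using col z by auto
    show ?thesis
    proof (cases "even j")
      case True
      have h1: "u \<in> ?S j" and h2: "z \<in> V - ?S j" using True u zV cz by (auto simp: Sk_def)
      show ?thesis unfolding good_def by (rule flow[OF Sk_sub Sk_pr[OF col] h1 h2])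
    next
      case False
      have h1: "z \<in> ?S j" and h2: "u \<in> V - ?S j" using False u zV cz by (auto simp: Sk_def)
      show ?thesis unfolding good_def by (rule flow[OF Sk_sub Sk_pr[OF col] h1 h2])
    qed
  qed
  have good_mono: "good k d \<Longrightarrow> d' \<le> d \<Longrightarrow> good k d'" for k d d'
    unfolding good_def by (meson order_less_le_trans)
  have good_par: "?S k = ?S k' \<Longrightarrow> good k d = good k' d" for k k' d
    unfolding good_def by simp
  obtain d0 where d0: "d0 > 0" "good 0 d0" using flowS[of 0] by blast
  obtain d1 where d1: "d1 > 0" "good 1 d1" using flowS[of 1] by blast
  define \<delta> where "\<delta> = min d0 d1"
  have \<delta>: "\<delta> > 0" using d0 d1 unfolding \<delta>_def by simp
  have FS: "good k \<delta>" for k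
  proof (cases "even k")
    case True
    have "\<delta> \<le> d0" unfolding \<delta>_def by simp
    moreover have "?S k = ?S 0" using True unfolding Sk_def by auto
    ultimately show ?thesis using good_mono[OF d0(2)] good_par[of k 0] by blast
  next
    case False
    have "\<delta> \<le> d1" unfolding \<delta>_def by simp
    moreover have "?S k = ?S 1" using False unfolding Sk_def by auto
    ultimately show ?thesis using good_mono[OF d1(2)] good_par[of k 1] by blast
  qed
  let ?e = "\<lambda>k. \<Sum>t\<in>V. \<bar>wd 0 u k t - sd2 (?S k) t\<bar>"
  let ?f = "\<lambda>k. \<Sum>t\<in>V. \<bar>wd b v k t - sd t\<bar>"
  have e0: "?e \<longlonglongrightarrow> 0" by (rule conv_bip[OF col u])
  have f0: "?f \<longlonglongrightarrow> 0" by (rule conv_pi[OF v]) (use b in auto)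
  have "(\<lambda>k. ?e k + 2 * ?f k) \<longlonglongrightarrow> 0 + 2 * 0" by (intro tendsto_add tendsto_mult e0 f0 tendsto_const)
  then have "\<forall>\<^sub>F k in sequentially. ?e k + 2 * ?f k < \<delta>" using \<delta> by (intro order_tendstoD) auto
  then obtain N where N: "\<And>k. k \<ge> N \<Longrightarrow> ?e k + 2 * ?f k < \<delta>" by (auto simp: eventually_sequentially)
  show ?thesis
  proof (intro exI[of _ N] allI impI)
    fix k assume k: "k \<ge> N"
    let ?A = "?S k"
    let ?\<mu> = "wd 0 u k" and ?\<nu> = "wd b v k"
    have AV: "?A \<subseteq> V" by (rule Sk_sub)
    have fA: "finite ?A" using AV fin finite_subset by blast
    have muA: "x \<in> V \<Longrightarrow> x \<notin> ?A \<Longrightarrow> ?\<mu> x = 0" for x using supp_bip[OF col] by blast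
    have mu_nn: "?\<mu> x \<ge> 0" for x by (rule wd_nonneg) auto
    have nu_nn: "?\<nu> x \<ge> 0" for x by (rule wd_nonneg) (use b in auto)
    have sumA_mu: "(\<Sum>x\<in>?A. ?\<mu> x) = 1"
    proof -
      have "(\<Sum>x\<in>?A. ?\<mu> x) = (\<Sum>x\<in>V. ?\<mu> x)" by (rule sum.mono_neutral_left[OF fin AV]) (use muA in auto)
      then show ?thesis using wd_row[OF u] by simp
    qed
    have split_nu: "(\<Sum>x\<in>?A. ?\<nu> x) + (\<Sum>x\<in>V - ?A. ?\<nu> x) = 1"
      using sum.subset_diff[OF AV fin, of ?\<nu>] wd_row[OF v] by simp
    define a where "a x = ?\<mu> x - ?\<nu> x" for x
    have small1: "(\<Sum>x\<in>?A. \<bar>a x - sd x\<bar>) \<le> ?e k + ?f k"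
    proof -
      have "(\<Sum>x\<in>?A. \<bar>a x - sd x\<bar>) \<le> (\<Sum>x\<in>?A. \<bar>?\<mu> x - sd2 ?A x\<bar> + \<bar>?\<nu> x - sd x\<bar>)"
        unfolding a_def sd2_def by (intro sum_mono) auto
      also have "\<dots> = (\<Sum>x\<in>?A. \<bar>?\<mu> x - sd2 ?A x\<bar>) + (\<Sum>x\<in>?A. \<bar>?\<nu> x - sd x\<bar>)" by (simp add: sum.distrib)
      also have "\<dots> \<le> ?e k + ?f k"
        by (intro add_mono sum_mono2[OF fin AV]) auto
      finally show ?thesis .
    qed
    have small2: "(\<Sum>y\<in>V - ?A. \<bar>?\<nu> y - sd y\<bar>) \<le> ?f k"
      by (intro sum_mono2[OF fin]) auto
    have "(\<Sum>x\<in>?A. \<bar>a x - sd x\<bar>) + (\<Sum>y\<in>V - ?A. \<bar>?\<nu> y - sd y\<bar>) < \<delta>"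
      using small1 small2 N[OF k] by linarith
    moreover have "(\<Sum>x\<in>?A. a x) = (\<Sum>y\<in>V - ?A. ?\<nu> y)"
      unfolding a_def using sumA_mu split_nu by (simp add: sum_subtractf)
    ultimately obtain w where w: "suppok ?A w" "\<forall>x y. w x y \<ge> 0" "\<forall>x\<in>?A. rs w x = a x" "\<forall>y\<in>V - ?A. cs w y = ?\<nu> y"
    proof -
      have "good k \<delta>" by (rule FS)
      then show ?thesis using that \<open>(\<Sum>x\<in>?A. \<bar>a x - sd x\<bar>) + (\<Sum>y\<in>V - ?A. \<bar>?\<nu> y - sd y\<bar>) < \<delta>\<close> \<open>(\<Sum>x\<in>?A. a x) = (\<Sum>y\<in>V - ?A. ?\<nu> y)\<close>
        unfolding good_def by blast
    qed
    have wz: "w x y \<noteq> 0 \<Longrightarrow> x \<in> ?A \<and> E x y" for x y using w(1) unfolding suppok_def by blast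
    have wz2: "w x y \<noteq> 0 \<Longrightarrow> y \<notin> ?A" for x y using wz Sk_pr[OF col] by blast
    define T where "T x y = (if x = y \<and> x \<in> ?A then ?\<nu> x else 0) + w x y" for x y
    have plan: "transport_plan V ?\<mu> ?\<nu> T"
      unfolding transport_plan_def
    proof (intro conjI ballI)
      fix x y show "T x y \<ge> 0" unfolding T_def using w(2) nu_nn by (simp add: add_nonneg_nonneg)
    next
      fix x assume x: "x \<in> V"
      have "(\<Sum>y\<in>V. T x y) = (if x \<in> ?A then ?\<nu> x else 0) + rs w x"
      proof -
        have "(\<Sum>y\<in>V. if x = y \<and> x \<in> ?A then ?\<nu> x else 0) = (if x \<in> ?A then ?\<nu> x else 0)"
          by (cases "x \<in> ?A") (simp_all add: x fin)
        then show ?thesis unfolding T_def rs_def by (simp add: sum.distrib)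
      qed
      also have "\<dots> = ?\<mu> x"
      proof (cases "x \<in> ?A")
        case True then show ?thesis using w(3) unfolding a_def by simp
      next
        case False
        have "rs w x = 0" unfolding rs_def using wz False by (auto intro!: sum.neutral)
        then show ?thesis using False muA[OF x] by simp
      qed
      finally show "(\<Sum>y\<in>V. T x y) = ?\<mu> x" .
    next
      fix y assume y: "y \<in> V"
      have "(\<Sum>x\<in>V. T x y) = (if y \<in> ?A then ?\<nu> y else 0) + cs w y"
      proof -
        have "(\<Sum>x\<in>V. if x = y \<and> x \<in> ?A then ?\<nu> x else 0) = (if y \<in> ?A then ?\<nu> y else 0)"
        proof -
          have "(\<Sum>x\<in>V. if x = y \<and> x \<in> ?A then ?\<nu> x else 0) = (\<Sum>x\<in>V. if x = y then (if y \<in> ?A then ?\<nu> y else 0) else 0)"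
            by (intro sum.cong) auto
          also have "\<dots> = (if y \<in> ?A then ?\<nu> y else 0)" using y fin by simp
          finally show ?thesis .
        qed
        then show ?thesis unfolding T_def cs_def by (simp add: sum.distrib)
      qed
      also have "\<dots> = ?\<nu> y"
      proof (cases "y \<in> ?A")
        case True
        have "cs w y = 0" unfolding cs_def using wz2 True by (auto intro!: sum.neutral)
        then show ?thesis using True by simp
      next
        case False then show ?thesis using w(4) y by simp
      qed
      finally show "(\<Sum>x\<in>V. T x y) = ?\<nu> y" .
    qed
    have "cost T = (\<Sum>x\<in>V. \<Sum>y\<in>V. w x y)"
    proof (intro sum.cong refl)
      fix x y
      show "real (gdist V E x y) * T x y = w x y"
      proof (cases "w x y = 0")
        case True then show ?thesis unfolding T_def by (auto simp: gdist_refl)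
      next
        case False
        then have "E x y" using wz by blast
        then have "x \<noteq> y" "gdist V E x y = 1" using Eirr gdist_edge by auto
        then show ?thesis unfolding T_def by simp
      qed
    qed
    also have "\<dots> = (\<Sum>y\<in>V. cs w y)" unfolding cs_def by (rule sum.swap)
    also have "\<dots> = (\<Sum>y\<in>V - ?A. cs w y)"
    proof (rule sum.mono_neutral_right[OF fin])
      show "V - ?A \<subseteq> V" by auto
      show "\<forall>i\<in>V - (V - ?A). cs w i = 0" unfolding cs_def using wz2 by (auto intro!: sum.neutral)
    qed
    also have "\<dots> = (\<Sum>y\<in>V - ?A. ?\<nu> y)" using w(4) by simp
    finally have up: "wasserstein V E ?\<mu> ?\<nu> \<le> (\<Sum>y\<in>V - ?A. ?\<nu> y)" using W_upper[OF plan] by simp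
    have "wasserstein V E ?\<mu> ?\<nu> \<ge> (\<Sum>y\<in>V - ?A. ?\<nu> y) - (\<Sum>y\<in>V - ?A. ?\<mu> y)"
      by (rule W_lower) (use mu_nn nu_nn wd_row[OF u] wd_row[OF v] in auto)
    moreover have "(\<Sum>y\<in>V - ?A. ?\<mu> y) = 0" using muA by (auto intro!: sum.neutral)
    ultimately show "wasserstein V E ?\<mu> ?\<nu> = (\<Sum>y\<in>V - ?A. ?\<nu> y)" using up by simp
  qed
qed

end

lemma (in gr) W_upper1: "transport_plan V \<mu> \<nu> T \<Longrightarrow>
  wasserstein V E \<mu> \<nu> \<le> (\<Sum>x\<in>V. \<Sum>y\<in>V. real (gdist V E x y) * T x y)"
  unfolding wasserstein_def
  by (rule cInf_lower) (auto intro!: bdd_belowI[of _ 0] sum_nonneg mult_nonneg_nonneg simp: transport_plan_def)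

lemma sandwich0: fixes e a b :: "nat \<Rightarrow> real"
  assumes "a \<longlonglongrightarrow> 0" "b \<longlonglongrightarrow> 0" "\<And>k. 0 \<le> e k" "\<And>k. e k \<le> a k + b k"
  shows "e \<longlonglongrightarrow> 0"
proof (rule tendsto_sandwich[of "\<lambda>_. 0" e sequentially "\<lambda>k. a k + b k"])
  show "(\<lambda>k. a k + b k) \<longlonglongrightarrow> 0" using tendsto_add[OF assms(1,2)] by simp
qed (use assms in auto)

theorem theorem5p7:
  fixes V :: "'a set" and E :: "'a \<Rightarrow> 'a \<Rightarrow> bool" and u v :: 'a and \<alpha> \<beta> :: real
  assumes "guvab V E u v \<alpha> \<beta>"
    and "(\<lambda>k. Wk V E u v \<alpha> \<beta> k) \<longlonglongrightarrow> 1 / 2"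
    and "\<beta> < 1"
  shows "\<exists>N. \<forall>k\<ge>N. \<bar>Wk V E u v \<alpha> \<beta> k - 1 / 2\<bar> = 0.5 * \<bar>1 - 2 * \<beta>\<bar> ^ k"
proof -
  have conn: "connected_graph V E" and u: "u \<in> V" and v: "v \<in> V"
    and a0: "0 \<le> \<alpha>" and ab: "\<alpha> \<le> \<beta>" and b1: "\<beta> \<le> 1"
    using assms(1) unfolding guvab_def by auto
  have lim: "(\<lambda>k. wasserstein V E (walk_dist V E \<alpha> u k) (walk_dist V E \<beta> v k)) \<longlonglongrightarrow> 1/2"
    using assms(2) unfolding Wk_def .
  interpret gr V E by unfold_locales (rule conn)
  show ?thesis
  proof (cases "card V \<ge> 2")
    case False
    have "card V \<ge> 1" using Vne fin by (simp add: Suc_leI card_gt_0_iff)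
    then have "card V = 1" using False by simp
    then obtain z where "V = {z}" by (rule card_1_singletonE)
    then have Vu: "V = {u}" using u by auto
    then have vu: "v = u" using v by auto
    have d0: "deg V E u = 0" unfolding deg_def using Vu Eirr by auto
    have wdu: "walk_dist V E g u k t = (if t = u then 1 else 0)" for g k t
    proof (induction k arbitrary: t)
      case 0 then show ?case by simp
    next
      case (Suc k)
      show ?case using Suc d0 Vu by (simp add: trans_prob_def)
    qed
    have W0: "wasserstein V E (walk_dist V E \<alpha> u k) (walk_dist V E \<beta> v k) \<le> 0" for k
    proof -
      have "transport_plan V (walk_dist V E \<alpha> u k) (walk_dist V E \<beta> v k) (\<lambda>x y. if x = u \<and> y = u then 1 else 0)"
      proof -
        have wdu2: "walk_dist {u} E g u k t = (if t = u then 1 else 0)" for g k t using wdu[of g k t] Vu by simp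
        show ?thesis unfolding transport_plan_def Vu vu by (simp add: wdu2)
      qed
      moreover have "gdist {u} E u u = 0" using gdist_refl[of u] Vu by simp
      ultimately show ?thesis using W_upper1 Vu by simp
    qed
    have "1/2 \<le> (0::real)" by (rule LIMSEQ_le_const2[OF lim]) (use W0 in auto)
    then show ?thesis by simp
  next
    case True
    interpret gr2 V E by unfold_locales (rule True)
    let ?\<mu> = "\<lambda>k. wd \<alpha> u k" and ?\<nu> = "\<lambda>k. wd \<beta> v k"
    have a1: "\<alpha> \<le> 1" using ab b1 by simp
    have tv: False if e0: "(\<lambda>k. \<Sum>t\<in>V. \<bar>?\<mu> k t - ?\<nu> k t\<bar>) \<longlonglongrightarrow> 0"
    proof -
      have "(\<lambda>k. real Mx * (\<Sum>t\<in>V. \<bar>?\<mu> k t - ?\<nu> k t\<bar>)) \<longlonglongrightarrow> real Mx * 0"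
        by (intro tendsto_mult tendsto_const e0)
      moreover have "wasserstein V E (?\<mu> k) (?\<nu> k) \<le> real Mx * (\<Sum>t\<in>V. \<bar>?\<mu> k t - ?\<nu> k t\<bar>)" for k
        by (rule W_tv) (use wd_nonneg a0 a1 b1 ab wd_row u v in auto)
      ultimately have "1/2 \<le> real Mx * 0" by (intro LIMSEQ_le[OF lim]) auto
      then show False by simp
    qed
    have tri: False if c1: "(\<lambda>k. \<Sum>t\<in>V. \<bar>?\<mu> k t - p k t\<bar>) \<longlonglongrightarrow> 0"
        and c2: "(\<lambda>k. \<Sum>t\<in>V. \<bar>?\<nu> k t - p k t\<bar>) \<longlonglongrightarrow> 0" for p
    proof (rule tv, rule sandwich0[OF c1 c2])
      fix k
      show "0 \<le> (\<Sum>t\<in>V. \<bar>?\<mu> k t - ?\<nu> k t\<bar>)" by (simp add: sum_nonneg)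
      have "(\<Sum>t\<in>V. \<bar>?\<mu> k t - ?\<nu> k t\<bar>) \<le> (\<Sum>t\<in>V. \<bar>?\<mu> k t - p k t\<bar> + \<bar>?\<nu> k t - p k t\<bar>)"
        by (intro sum_mono) auto
      then show "(\<Sum>t\<in>V. \<bar>?\<mu> k t - ?\<nu> k t\<bar>) \<le> (\<Sum>t\<in>V. \<bar>?\<mu> k t - p k t\<bar>) + (\<Sum>t\<in>V. \<bar>?\<nu> k t - p k t\<bar>)"
        by (simp add: sum.distrib)
    qed
    show ?thesis
    proof (cases bip)
      case False
      have "(\<lambda>k. \<Sum>t\<in>V. \<bar>?\<mu> k t - sd t\<bar>) \<longlonglongrightarrow> 0" by (rule conv_pi) (use u a0 ab assms(3) False in auto)
      moreover have "(\<lambda>k. \<Sum>t\<in>V. \<bar>?\<nu> k t - sd t\<bar>) \<longlonglongrightarrow> 0" by (rule conv_pi) (use v a0 ab assms(3) False in auto)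
      ultimately show ?thesis using tri[of "\<lambda>k. sd"] by blast
    next
      case True
      then obtain col :: "'a \<Rightarrow> bool" where col: "\<forall>x y. E x y \<longrightarrow> col x \<noteq> col y" unfolding bip_def by blast
      show ?thesis
      proof (cases "\<alpha> > 0")
        case True
        have "(\<lambda>k. \<Sum>t\<in>V. \<bar>?\<mu> k t - sd t\<bar>) \<longlonglongrightarrow> 0" by (rule conv_pi) (use u a0 ab assms(3) True in auto)
        moreover have "(\<lambda>k. \<Sum>t\<in>V. \<bar>?\<nu> k t - sd t\<bar>) \<longlonglongrightarrow> 0" by (rule conv_pi) (use v a0 ab assms(3) True in auto)
        ultimately show ?thesis using tri[of "\<lambda>k. sd"] by blast
      next
        case False
        then have a00: "\<alpha> = 0" using a0 by simp
        show ?thesis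
        proof (cases "\<beta> > 0")
          case False
          then have b00: "\<beta> = 0" using ab a0 by simp
          show ?thesis
          proof (cases "col u = col v")
            case True
            have eqS: "Sk col v k = Sk col u k" for k :: nat unfolding Sk_def using True by simp
            have "(\<lambda>k. \<Sum>t\<in>V. \<bar>?\<mu> k t - sd2 (Sk col u k) t\<bar>) \<longlonglongrightarrow> 0"
              using conv_bip[OF col u] a00 by simp
            moreover have "(\<lambda>k. \<Sum>t\<in>V. \<bar>?\<nu> k t - sd2 (Sk col u k) t\<bar>) \<longlonglongrightarrow> 0"
              using conv_bip[OF col v] b00 eqS by simp
            ultimately show ?thesis using tri[of "\<lambda>k. sd2 (Sk col u k)"] by blast
          next
            case False
            have ge1: "wasserstein V E (?\<mu> k) (?\<nu> k) \<ge> 1" for k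
            proof -
              have "wasserstein V E (?\<mu> k) (?\<nu> k) \<ge> (\<Sum>x\<in>Sk col v k. ?\<nu> k x) - (\<Sum>x\<in>Sk col v k. ?\<mu> k x)"
                by (rule W_lower) (use wd_nonneg a0 a1 b1 ab wd_row u v Sk_sub[of col v k] in auto)
              moreover have "(\<Sum>x\<in>Sk col v k. ?\<mu> k x) = 0"
              proof (rule sum.neutral, rule ballI)
                fix x assume x: "x \<in> Sk col v k"
                then have "x \<notin> Sk col u k" "x \<in> V" using False unfolding Sk_def by auto
                then show "?\<mu> k x = 0" using supp_bip[OF col] a00 by simp
              qed
              moreover have "(\<Sum>x\<in>Sk col v k. ?\<nu> k x) = 1"
              proof -
                have "(\<Sum>x\<in>Sk col v k. ?\<nu> k x) = (\<Sum>x\<in>V. ?\<nu> k x)"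
                  by (rule sum.mono_neutral_left[OF fin Sk_sub]) (use supp_bip[OF col] b00 in auto)
                then show ?thesis using wd_row[OF v] by simp
              qed
              ultimately show ?thesis by simp
            qed
            have "1 \<le> (1/2::real)" by (rule LIMSEQ_le_const[OF lim]) (use ge1 in auto)
            then show ?thesis by simp
          qed
        next
          case True
          obtain N where N: "\<And>k. k \<ge> N \<Longrightarrow> wasserstein V E (wd 0 u k) (wd \<beta> v k) = (\<Sum>y\<in>V - Sk col u k. wd \<beta> v k y)"
            using main_case[OF col u v True assms(3)] by blast
          show ?thesis
          proof (intro exI[of _ N] allI impI)
            fix k assume k: "k \<ge> N"
            have eqB: "V - Sk col u k = {x\<in>V. col x = (col u = odd k)}" unfolding Sk_def by auto
            have "\<bar>Wk V E u v \<alpha> \<beta> k - 1/2\<bar> = \<bar>(\<Sum>y\<in>{x\<in>V. col x = (col u = odd k)}. wd \<beta> v k y) - 1/2\<bar>"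
              unfolding Wk_def using N[OF k] a00 eqB by simp
            also have "\<dots> = 1/2 * \<bar>2*\<beta>-1\<bar>^k" by (rule class_sum[OF col v]) (use ab a0 b1 in auto)
            also have "\<dots> = 0.5 * \<bar>1 - 2 * \<beta>\<bar> ^ k" by (simp add: abs_minus_commute)
            finally show "\<bar>Wk V E u v \<alpha> \<beta> k - 1 / 2\<bar> = 0.5 * \<bar>1 - 2 * \<beta>\<bar> ^ k" .
          qed
        qed
      qed
    qed
  qed
qed

end
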